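(* Assume the setting below, let $\nu\in(0,1)$, $\mu>0$, let $\theta^*\in\Theta$ be fixed (non-random), and let $s>0$ satisfy $$s\le\frac{\mu n}{[2C_b(1-\nu)]^2}\qquad\text{and}\qquad s<\frac{n}{2\sqrt3\,bC_b(1-\nu)}.$$ Then for every $\Theta$-valued random vector $\hat\theta$ that is a measurable function of the data $\mathcal D$, $$\mathbb E\exp\Big[s\Big((1-\nu)(P-P_n)(\ell_{\hat\theta}-\ell_{\theta^*})-\mu\sum_{j=1}^M\hat\theta_j\|f_j-f_{\theta^*}\|_2^2\Big)-K(\hat\theta)\Big]\le1 .$$
   Context: Setting: $(X,Y)$ random pair in $\mathcal X\times\mathbb R$ with $|Y|\le b$ a.s. ($b>0$); data $\mathcal D=\{(X_i,Y_i)\}_{i=1}^n$ i.i.d. copies of $(X,Y)$; $f_1,\dots,f_M$ deterministic measurable functions with $\max_j|f_j(X)|\le b$ a.s.; $\Theta=\{\theta\in\mathbb R^M:\theta_j\ge0,\ \sum_j\theta_j=1\}$, $f_\theta=\sum_j\theta_jf_j$; $\|f\|_2=\sqrt{\mathbb E f(X)^2}$; prior $\pi$ with $\pi_j>0$, $\sum_j\pi_j=1$, and $K(\theta)=\sum_j\theta_j\log(1/\pi_j)$. The loss satisfies: for all $f,g\in[-b,b]$, $|\ell(Y,f)-\ell(Y,g)|\le C_b|f-g|$ a.s. Notation: $\ell_\theta(y,x)=\ell(y,f_\theta(x))$; for $g(y,x)$ (possibly data-dependent), $Pg=\mathbb E[g(Y,X)\mid\mathcal D]$ with $(X,Y)$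 independent of $\mathcal D$, and $P_ng=\frac1n\sum_ig(Y_i,X_i)$. *)

theory Defs
  imports "HOL-Probability.Probability"
begin

text \<open>Weights are vectors indexed by j < M (0-based), stored as functions nat => real.\<close>

definition Theta :: "nat \<Rightarrow> (nat \<Rightarrow> real) set" where
  "Theta M = {\<theta>. (\<forall>j<M. 0 \<le> \<theta> j) \<and> (\<Sum>j<M. \<theta> j) = 1}"

definition f_theta :: "nat \<Rightarrow> (nat \<Rightarrow> 'a \<Rightarrow> real) \<Rightarrow> (nat \<Rightarrow> real) \<Rightarrow> 'a \<Rightarrow> real" where
  "f_theta M f \<theta> x = (\<Sum>j<M. \<theta> j * f j x)"

definition Kfun :: "nat \<Rightarrow> (nat \<Rightarrow> real) \<Rightarrow> (nat \<Rightarrow> real) \<Rightarrow> real" where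
  "Kfun M pr \<theta> = (\<Sum>j<M. \<theta> j * ln (1 / pr j))"

end

theory Submission
  imports Defs "HOL-Probability.Hoeffding"
begin


lemma exp_incr_mono:
  fixes y y' d :: real
  assumes "y' \<le> y" "0 \<le> d"
  shows "exp (y'+d) - exp y' \<le> exp (y+d) - exp y"
proof -
  have "exp (y'+d) - exp y' = exp y' * (exp d - 1)" by (simp add: exp_add algebra_simps)
  also have "\<dots> \<le> exp y * (exp d - 1)"
    using assms by (intro mult_right_mono) auto
  also have "\<dots> = exp (y+d) - exp y" by (simp add: exp_add algebra_simps)
  finally show ?thesis .
qed

lemma exp_majorize_aux:
  fixes x y X Y :: real
  assumes "x + y \<le> X + Y" "y \<le> x" "Y \<le> X" "x \<le> X"
  shows "exp x + exp y \<le> exp X + exp Y"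
proof -
  define y' where "y' = x + y - X"
  have "exp (y' + (X - y)) - exp y' \<le> exp (y + (X - y)) - exp y"
    by (rule exp_incr_mono) (use assms in \<open>auto simp: y'_def\<close>)
  then have "exp x + exp y \<le> exp X + exp y'" by (simp add: y'_def)
  also have "exp y' \<le> exp Y" using assms by (simp add: y'_def)
  finally show ?thesis by simp
qed

lemma exp_majorize:
  fixes x y X Y :: real
  assumes "x + y \<le> X + Y" "max x y \<le> max X Y"
  shows "exp x + exp y \<le> exp X + exp Y"
proof -
  have "x + y \<le> max X Y + min X Y" "max x y \<le> max X Y"
    using assms by (auto simp: max_def min_def)
  then have "exp (max x y) + exp (min x y) \<le> exp (max X Y) + exp (min X Y)"
    by (intro exp_majorize_aux) (auto simp: max_def min_def)
  then show ?thesis by (auto simp: max_def min_def split: if_splits)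
qed

lemma pair_contr:
  fixes a w p a' w' p' :: real
  assumes "\<bar>p\<bar> \<le> \<bar>w\<bar>" "\<bar>p'\<bar> \<le> \<bar>w'\<bar>" "\<bar>p - p'\<bar> \<le> \<bar>w - w'\<bar>"
  shows "\<exists>X\<in>{a+w, a'+w'}. \<exists>Y\<in>{a-w, a'-w'}. exp (a+p) + exp (a'-p') \<le> exp X + exp Y"
proof -
  have "\<exists>X\<in>{a+w, a'+w'}. \<exists>Y\<in>{a-w, a'-w'}. (a+p) + (a'-p') \<le> X + Y \<and> max (a+p) (a'-p') \<le> max X Y"
    using assms unfolding max_def by (auto simp: abs_if split: if_splits)
  then show ?thesis using exp_majorize by blast
qed


lemma sup_add_le:
  fixes f g :: "'b \<Rightarrow> ennreal"
  assumes "\<And>t s. t \<in> T \<Longrightarrow> s \<in> T \<Longrightarrow> f t + g s \<le> R"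
  shows "(SUP t\<in>T. f t) + (SUP s\<in>T. g s) \<le> R"
proof (cases "T = {}")
  case True then show ?thesis by simp
next
  case False
  have "(SUP t\<in>T. f t) + (SUP s\<in>T. g s) = (SUP t\<in>T. f t + (SUP s\<in>T. g s))"
    using False by (simp add: ennreal_SUP_add_left)
  also have "\<dots> = (SUP t\<in>T. SUP s\<in>T. f t + g s)"
    using False by (simp add: ennreal_SUP_add_right)
  also have "\<dots> \<le> R" using assms by (intro SUP_least) auto
  finally show ?thesis .
qed

lemma sup_step:
  fixes A p w :: "'b \<Rightarrow> real"
  assumes "\<And>t. t \<in> T \<Longrightarrow> \<bar>p t\<bar> \<le> \<bar>w t\<bar>"
    and "\<And>t s. t \<in> T \<Longrightarrow> s \<in> T \<Longrightarrow> \<bar>p t - p s\<bar> \<le> \<bar>w t - w s\<bar>"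
  shows "(SUP t\<in>T. ennreal (exp (A t + p t))) + (SUP t\<in>T. ennreal (exp (A t - p t)))
     \<le> (SUP t\<in>T. ennreal (exp (A t + w t))) + (SUP t\<in>T. ennreal (exp (A t - w t)))"
proof (rule sup_add_le)
  fix t s assume ts: "t \<in> T" "s \<in> T"
  obtain X Y where XY: "X \<in> {A t + w t, A s + w s}" "Y \<in> {A t - w t, A s - w s}"
    "exp (A t + p t) + exp (A s - p s) \<le> exp X + exp Y"
    using pair_contr[of "p t" "w t" "p s" "w s" "A t" "A s"] assms ts by auto
  have "ennreal (exp (A t + p t)) + ennreal (exp (A s - p s)) \<le> ennreal (exp X) + ennreal (exp Y)"
    using XY(3) by (metis ennreal_leI ennreal_plus exp_ge_zero)
  also have "\<dots> \<le> (SUP t\<in>T. ennreal (exp (A t + w t))) + (SUP t\<in>T. ennreal (exp (A t - w t)))"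
    using XY(1,2) ts by (intro add_mono) (auto intro: SUP_upper2)
  finally show "ennreal (exp (A t + p t)) + ennreal (exp (A s - p s)) \<le> \<dots>" .
qed

lemma sup_step':
  fixes A p w :: "'b \<Rightarrow> real"
  assumes "\<And>t. t \<in> T \<Longrightarrow> \<bar>p t\<bar> \<le> \<bar>w t\<bar>"
    and "\<And>t s. t \<in> T \<Longrightarrow> s \<in> T \<Longrightarrow> \<bar>p t - p s\<bar> \<le> \<bar>w t - w s\<bar>"
  shows "(SUP t\<in>T. ennreal (exp (A t - p t))) + (SUP t\<in>T. ennreal (exp (A t + p t)))
     \<le> (SUP t\<in>T. ennreal (exp (A t - w t))) + (SUP t\<in>T. ennreal (exp (A t + w t)))"
  using sup_step[of T p w A, OF assms] by (simp add: add.commute)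

definition sg :: "nat set \<Rightarrow> nat \<Rightarrow> real" where
  "sg S i = (if i \<in> S then 1 else -1)"

lemma sum_Pow_insert:
  assumes "finite I" "i \<notin> I"
  shows "sum F (Pow (insert i I)) = (\<Sum>S\<in>Pow I. F S + F (insert i S))"
proof -
  have inj: "inj_on (insert i) (Pow I)"
    using assms(2) by (auto simp: inj_on_def)
  have "sum F (Pow (insert i I)) = sum F (Pow I) + sum F (insert i ` Pow I)"
    unfolding Pow_insert using assms by (intro sum.union_disjoint) auto
  also have "sum F (insert i ` Pow I) = (\<Sum>S\<in>Pow I. F (insert i S))"
    using inj by (simp add: sum.reindex)
  finally show ?thesis by (simp add: sum.distrib)
qed

lemma sg_sum_insert:
  assumes "finite I" "i \<notin> I" "S \<subseteq> I"
  shows "(\<Sum>j\<in>insert i I. sg S j * x j) = (\<Sum>j\<in>I. sg S j * x j) - x i"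
    and "(\<Sum>j\<in>insert i I. sg (insert i S) j * x j) = (\<Sum>j\<in>I. sg S j * x j) + x i"
proof -
  show "(\<Sum>j\<in>insert i I. sg S j * x j) = (\<Sum>j\<in>I. sg S j * x j) - x i"
    using assms by (auto simp: sg_def)
  have "(\<Sum>j\<in>I. sg (insert i S) j * x j) = (\<Sum>j\<in>I. sg S j * x j)"
    using assms by (intro sum.cong) (auto simp: sg_def)
  then show "(\<Sum>j\<in>insert i I. sg (insert i S) j * x j) = (\<Sum>j\<in>I. sg S j * x j) + x i"
    using assms by (simp add: sg_def)
qed

lemma contraction:
  fixes p w :: "nat \<Rightarrow> 'b \<Rightarrow> real"
  assumes "finite I"
    and "\<And>i t. i \<in> I \<Longrightarrow> t \<in> T \<Longrightarrow> \<bar>p i t\<bar> \<le> \<bar>w i t\<bar>"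
    and "\<And>i t s. i \<in> I \<Longrightarrow> t \<in> T \<Longrightarrow> s \<in> T \<Longrightarrow> \<bar>p i t - p i s\<bar> \<le> \<bar>w i t - w i s\<bar>"
  shows "(\<Sum>S\<in>Pow I. SUP t\<in>T. ennreal (exp (A t + (\<Sum>i\<in>I. sg S i * p i t))))
       \<le> (\<Sum>S\<in>Pow I. SUP t\<in>T. ennreal (exp (A t + (\<Sum>i\<in>I. sg S i * w i t))))"
  using assms
proof (induction I arbitrary: A rule: finite_induct)
  case empty
  then show ?case by simp
next
  case (insert i I)
  have "(\<Sum>S\<in>Pow (insert i I). SUP t\<in>T. ennreal (exp (A t + (\<Sum>j\<in>insert i I. sg S j * p j t))))
     = (\<Sum>S\<in>Pow I. (SUP t\<in>T. ennreal (exp ((A t + (\<Sum>j\<in>I. sg S j * p j t)) - p i t)))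
                  + (SUP t\<in>T. ennreal (exp ((A t + (\<Sum>j\<in>I. sg S j * p j t)) + p i t))))"
    apply (subst sum_Pow_insert[OF insert.hyps])
    apply (intro sum.cong refl)
    subgoal for S
      using sg_sum_insert[OF insert.hyps, of S] by (simp add: add_diff_eq add.assoc)
    done
  also have "\<dots> \<le> (\<Sum>S\<in>Pow I. (SUP t\<in>T. ennreal (exp ((A t + (\<Sum>j\<in>I. sg S j * p j t)) - w i t)))
                  + (SUP t\<in>T. ennreal (exp ((A t + (\<Sum>j\<in>I. sg S j * p j t)) + w i t))))"
    apply (intro sum_mono)
    subgoal for S
      by (rule sup_step'[where A="\<lambda>t. A t + (\<Sum>j\<in>I. sg S j * p j t)"]) (use insert.prems in auto)
    done
  also have "\<dots> = (\<Sum>S\<in>Pow I. SUP t\<in>T. ennreal (exp ((A t - w i t) + (\<Sum>j\<in>I. sg S j * p j t))))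
                + (\<Sum>S\<in>Pow I. SUP t\<in>T. ennreal (exp ((A t + w i t) + (\<Sum>j\<in>I. sg S j * p j t))))"
    by (simp add: sum.distrib algebra_simps)
  also have "\<dots> \<le> (\<Sum>S\<in>Pow I. SUP t\<in>T. ennreal (exp ((A t - w i t) + (\<Sum>j\<in>I. sg S j * w j t))))
                + (\<Sum>S\<in>Pow I. SUP t\<in>T. ennreal (exp ((A t + w i t) + (\<Sum>j\<in>I. sg S j * w j t))))"
    by (intro add_mono insert.IH) (use insert.prems in auto)
  also have "\<dots> = (\<Sum>S\<in>Pow I. (SUP t\<in>T. ennreal (exp (A t + (\<Sum>j\<in>insert i I. sg S j * w j t))))
       + (SUP t\<in>T. ennreal (exp (A t + (\<Sum>j\<in>insert i I. sg (insert i S) j * w j t)))))"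
    apply (simp only: sum.distrib[symmetric])
    apply (intro sum.cong refl)
    subgoal for S
    proof -
      assume "S \<in> Pow I"
      then have S: "S \<subseteq> I" by auto
      show ?thesis
        by (simp only: sg_sum_insert[OF insert.hyps S]) (simp add: algebra_simps)
    qed
    done
  also have "\<dots> = (\<Sum>S\<in>Pow (insert i I). SUP t\<in>T. ennreal (exp (A t + (\<Sum>j\<in>insert i I. sg S j * w j t))))"
    by (rule sum_Pow_insert[OF insert.hyps, symmetric])
  finally show ?case .
qed

lemma sum_Pow_exp_sg:
  assumes "finite I"
  shows "(\<Sum>S\<in>Pow I. exp (\<Sum>i\<in>I. sg S i * y i)) = (\<Prod>i\<in>I. exp (y i) + exp (- y i))"
  using assms
proof (induction I rule: finite_induct)
  case empty then show ?case by simp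
next
  case (insert i I)
  have "(\<Sum>S\<in>Pow (insert i I). exp (\<Sum>j\<in>insert i I. sg S j * y j))
      = (\<Sum>S\<in>Pow I. exp (- y i) * exp (\<Sum>j\<in>I. sg S j * y j) + exp (y i) * exp (\<Sum>j\<in>I. sg S j * y j))"
    apply (subst sum_Pow_insert[OF insert.hyps])
    apply (intro sum.cong refl)
    subgoal for S
    proof -
      assume "S \<in> Pow I"
      then have S: "S \<subseteq> I" by auto
      show ?thesis
        by (simp only: sg_sum_insert[OF insert.hyps S] exp_add exp_diff) (simp add: exp_minus field_simps)
    qed
    done
  also have "\<dots> = (exp (y i) + exp (- y i)) * (\<Sum>S\<in>Pow I. exp (\<Sum>j\<in>I. sg S j * y j))"
    by (simp add: sum.distrib sum_distrib_left algebra_simps)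
  also have "\<dots> = (\<Prod>j\<in>insert i I. exp (y j) + exp (- y j))"
    using insert by simp
  finally show ?case .
qed


lemma cosh_le_exp_half:
  fixes a :: real assumes "0 \<le> a"
  shows "exp a + exp (- a) \<le> 2 * exp (a\<^sup>2 / 2)"
proof -
  have "- (2*a) * (1/2) + ln (1 + (1/2) * (exp (2*a) - 1)) \<le> (2*a)\<^sup>2 / 8"
    using Hoeffdings_lemma_aux[of "2*a" "1/2"] assms by simp
  then have "ln ((1 + exp (2*a)) / 2) \<le> a + a\<^sup>2 / 2"
    by (simp add: power2_eq_square field_simps)
  then have "(1 + exp (2*a)) / 2 \<le> exp (a + a\<^sup>2 / 2)"
    by (smt (verit) exp_ge_zero exp_le_cancel_iff exp_ln)
  then have "exp (-a) * ((1 + exp (2*a)) / 2) \<le> exp (-a) * exp (a + a\<^sup>2 / 2)"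
    by (intro mult_left_mono) auto
  moreover have "exp (-a) * ((1 + exp (2*a)) / 2) = (exp a + exp (-a)) / 2"
    by (simp add: field_simps exp_add[symmetric] exp_minus mult_2)
  moreover have "exp (-a) * exp (a + a\<^sup>2 / 2) = exp (a\<^sup>2 / 2)"
    by (simp add: exp_add[symmetric])
  ultimately show ?thesis by simp
qed

lemma cosh_bound:
  fixes x :: real assumes "x\<^sup>2 \<le> 2"
  shows "exp x + exp (- x) \<le> 2 * (1 + x\<^sup>2)"
proof -
  define a where "a = \<bar>x\<bar>"
  have a2: "a\<^sup>2 = x\<^sup>2" by (simp add: a_def)
  have "exp x + exp (- x) = exp a + exp (- a)"
    by (cases "x \<ge> 0") (auto simp: a_def)
  also have "\<dots> \<le> 2 * exp (a\<^sup>2 / 2)" using cosh_le_exp_half[of a] by (simp add: a_def)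
  also have "exp (a\<^sup>2 / 2) \<le> 1 + a\<^sup>2/2 + (a\<^sup>2/2)\<^sup>2"
    by (rule exp_bound) (use assms a2 in auto)
  also have "(a\<^sup>2/2)\<^sup>2 \<le> a\<^sup>2 / 2"
  proof -
    have "(a\<^sup>2/2)\<^sup>2 = (a\<^sup>2/2) * (a\<^sup>2/2)" by (simp add: power2_eq_square)
    also have "\<dots> \<le> (a\<^sup>2/2) * 1" using assms a2 by (intro mult_left_mono) auto
    finally show ?thesis by simp
  qed
  finally show ?thesis using a2 by simp
qed

lemma exp_convex_sum:
  fixes q y :: "nat \<Rightarrow> real"
  assumes "finite J" "J \<noteq> {}" "(\<Sum>j\<in>J. q j) = 1" "\<And>j. j \<in> J \<Longrightarrow> q j \<ge> 0"
  shows "exp (\<Sum>j\<in>J. q j * y j) \<le> (\<Sum>j\<in>J. q j * exp (y j))"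
  using convex_on_sum[OF assms(1,2) exp_convex assms(3,4), of y] by simp


lemma measurable_upd_pair:
  assumes "i \<in> J"
  shows "(\<lambda>x. (fst x)(i := snd x i)) \<in> measurable (PiM J M \<Otimes>\<^sub>M PiM J M) (PiM J M)"
proof -
  have "(\<lambda>x. (\<lambda>j. ((fst x)(i := snd x i)) j)) \<in> measurable (PiM J M \<Otimes>\<^sub>M PiM J M) (PiM J M)"
  proof (rule measurable_PiM_single')
    fix j assume j: "j \<in> J"
    show "(\<lambda>x. ((fst x)(i := snd x i)) j) \<in> measurable (PiM J M \<Otimes>\<^sub>M PiM J M) (M j)"
    proof (cases "j = i")
      case True then show ?thesis using j by simp measurable
    next
      case False then show ?thesis using j by simp measurable
    qed
  next
    show "(\<lambda>x. (\<lambda>j. ((fst x)(i := snd x i)) j)) \<in> space (PiM J M \<Otimes>\<^sub>M PiM J M) \<rightarrow> (\<Pi>\<^sub>E j\<in>J. space (M j))"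
      using assms by (auto simp: space_pair_measure space_PiM PiE_iff extensional_def)
  qed
  then show ?thesis by (simp add: fun_upd_def)
qed

lemma swap_one:
  fixes P :: "'z measure" and h :: "(nat \<Rightarrow> 'z) \<times> (nat \<Rightarrow> 'z) \<Rightarrow> ennreal"
  assumes P: "prob_space P" and I: "finite I" "i \<notin> I"
    and h[measurable]: "h \<in> borel_measurable (PiM (insert i I) (\<lambda>_. P) \<Otimes>\<^sub>M PiM (insert i I) (\<lambda>_. P))"
  shows "(\<integral>\<^sup>+D. \<integral>\<^sup>+D'. h (D(i := D' i), D'(i := D i)) \<partial>PiM (insert i I) (\<lambda>_. P) \<partial>PiM (insert i I) (\<lambda>_. P))
       = (\<integral>\<^sup>+D. \<integral>\<^sup>+D'. h (D, D') \<partial>PiM (insert i I) (\<lambda>_. P) \<partial>PiM (insert i I) (\<lambda>_. P))"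
proof -
  interpret prob_space P by fact
  interpret PS: product_prob_space "\<lambda>_::nat. P" by (rule product_prob_spaceI) (rule P)
  interpret PP: pair_sigma_finite P P by unfold_locales
  interpret PI: pair_sigma_finite P "PiM I (\<lambda>_. P)"
    by (intro pair_sigma_finite.intro sigma_finite_measure_axioms) (simp add: PS.sigma_finite_measure_axioms)
  let ?O = "PiM (insert i I) (\<lambda>_. P)"
  interpret PO: sigma_finite_measure ?O by (intro prob_space_imp_sigma_finite prob_space_PiM P)
  let ?I = "PiM I (\<lambda>_. P)"
  have L: "(\<integral>\<^sup>+D. \<integral>\<^sup>+D'. h (D(i := D' i), D'(i := D i)) \<partial>?O \<partial>?O)
     = (\<integral>\<^sup>+x. \<integral>\<^sup>+a. \<integral>\<^sup>+x'. \<integral>\<^sup>+a'. h (x(i := a'), x'(i := a)) \<partial>P \<partial>?I \<partial>P \<partial>?I)"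
  proof -
    have m1: "(\<lambda>x. (fst x)(i := snd x i)) \<in> measurable (?O \<Otimes>\<^sub>M ?O) ?O"
      by (rule measurable_upd_pair) simp
    have m2: "(\<lambda>x. (snd x)(i := fst x i)) \<in> measurable (?O \<Otimes>\<^sub>M ?O) ?O"
      using measurable_comp[OF measurable_pair_swap' measurable_upd_pair[of i "insert i I" "\<lambda>_. P"]]
      by (simp add: comp_def split_beta)
    have hm: "(\<lambda>x. h ((fst x)(i := snd x i), (snd x)(i := fst x i))) \<in> borel_measurable (?O \<Otimes>\<^sub>M ?O)"
      using m1 m2 by measurable
    then have m: "(\<lambda>D. \<integral>\<^sup>+D'. h (D(i := D' i), D'(i := D i)) \<partial>?O) \<in> borel_measurable ?O"
      by (intro PO.borel_measurable_nn_integral) (simp add: split_beta')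
    have "(\<integral>\<^sup>+D. \<integral>\<^sup>+D'. h (D(i := D' i), D'(i := D i)) \<partial>?O \<partial>?O)
       = (\<integral>\<^sup>+x. \<integral>\<^sup>+a. \<integral>\<^sup>+D'. h ((x(i:=a))(i := D' i), D'(i := (x(i:=a)) i)) \<partial>?O \<partial>P \<partial>?I)"
      by (rule PS.product_nn_integral_insert[OF I m])
    also have "\<dots> = (\<integral>\<^sup>+x. \<integral>\<^sup>+a. \<integral>\<^sup>+x'. \<integral>\<^sup>+a'. h ((x(i:=a))(i := (x'(i:=a')) i), (x'(i:=a'))(i := (x(i:=a)) i)) \<partial>P \<partial>?I \<partial>P \<partial>?I)"
    proof (intro nn_integral_cong)
      fix x a assume x: "x \<in> space ?I" and a: "a \<in> space P"
      have xa: "x(i:=a) \<in> space ?O" using measurable_component_update[OF x I(2)] a by (auto simp: measurable_def)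
      have "(\<lambda>D'. (x(i:=a), D')) \<in> measurable ?O (?O \<Otimes>\<^sub>M ?O)"
        using xa by measurable
      from measurable_comp[OF this hm]
      have [measurable]: "(\<lambda>D'. h ((x(i:=a))(i := D' i), D'(i := (x(i:=a)) i))) \<in> borel_measurable ?O"
        by (simp only: comp_def fst_conv snd_conv)
      then have [measurable]: "(\<lambda>D'. h (x(i := D' i), D'(i := a))) \<in> borel_measurable ?O"
        by simp
      show "(\<integral>\<^sup>+D'. h ((x(i:=a))(i := D' i), D'(i := (x(i:=a)) i)) \<partial>?O) = (\<integral>\<^sup>+x'. \<integral>\<^sup>+a'. h ((x(i:=a))(i := (x'(i:=a')) i), (x'(i:=a'))(i := (x(i:=a)) i)) \<partial>P \<partial>?I)"
        by (rule PS.product_nn_integral_insert[OF I]) simp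
    qed
    finally show ?thesis by simp
  qed
  have R: "(\<integral>\<^sup>+D. \<integral>\<^sup>+D'. h (D, D') \<partial>?O \<partial>?O)
     = (\<integral>\<^sup>+x. \<integral>\<^sup>+a. \<integral>\<^sup>+x'. \<integral>\<^sup>+a'. h (x(i := a), x'(i := a')) \<partial>P \<partial>?I \<partial>P \<partial>?I)"
  proof -
    have m: "(\<lambda>D. \<integral>\<^sup>+D'. h (D, D') \<partial>?O) \<in> borel_measurable ?O"
      by (intro PO.borel_measurable_nn_integral) simp
    have "(\<integral>\<^sup>+D. \<integral>\<^sup>+D'. h (D, D') \<partial>?O \<partial>?O)
       = (\<integral>\<^sup>+x. \<integral>\<^sup>+a. \<integral>\<^sup>+D'. h (x(i:=a), D') \<partial>?O \<partial>P \<partial>?I)"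
      by (rule PS.product_nn_integral_insert[OF I m])
    also have "\<dots> = (\<integral>\<^sup>+x. \<integral>\<^sup>+a. \<integral>\<^sup>+x'. \<integral>\<^sup>+a'. h (x(i := a), x'(i := a')) \<partial>P \<partial>?I \<partial>P \<partial>?I)"
    proof (intro nn_integral_cong)
      fix x a assume x: "x \<in> space ?I" and a: "a \<in> space P"
      have xa: "x(i:=a) \<in> space ?O" using measurable_component_update[OF x I(2)] a by (auto simp: measurable_def)
      have [measurable]: "(\<lambda>D'. h (x(i:=a), D')) \<in> borel_measurable ?O"
        using xa by measurable
      show "(\<integral>\<^sup>+D'. h (x(i:=a), D') \<partial>?O) = (\<integral>\<^sup>+x'. \<integral>\<^sup>+a'. h (x(i := a), x'(i := a')) \<partial>P \<partial>?I)"
        by (rule PS.product_nn_integral_insert[OF I]) simp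
    qed
    finally show ?thesis .
  qed
  have inner: "(\<integral>\<^sup>+a. \<integral>\<^sup>+x'. \<integral>\<^sup>+a'. h (x(i := a'), x'(i := a)) \<partial>P \<partial>?I \<partial>P)
       = (\<integral>\<^sup>+a. \<integral>\<^sup>+x'. \<integral>\<^sup>+a'. h (x(i := a), x'(i := a')) \<partial>P \<partial>?I \<partial>P)"
    if x: "x \<in> space ?I" for x
  proof -
    have [measurable]: "(\<lambda>a. x(i := a)) \<in> measurable P ?O"
      using measurable_component_update[OF x I(2)] .
    have "(\<integral>\<^sup>+a. \<integral>\<^sup>+x'. \<integral>\<^sup>+a'. h (x(i := a'), x'(i := a)) \<partial>P \<partial>?I \<partial>P)
        = (\<integral>\<^sup>+x'. \<integral>\<^sup>+a. \<integral>\<^sup>+a'. h (x(i := a'), x'(i := a)) \<partial>P \<partial>P \<partial>?I)"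
      by (rule PI.Fubini'[symmetric]) measurable
    also have "\<dots> = (\<integral>\<^sup>+x'. \<integral>\<^sup>+a. \<integral>\<^sup>+a'. h (x(i := a), x'(i := a')) \<partial>P \<partial>P \<partial>?I)"
    proof (rule nn_integral_cong)
      fix x' assume x': "x' \<in> space ?I"
      have [measurable]: "(\<lambda>a. x'(i := a)) \<in> measurable P ?O"
        using measurable_component_update[OF x' I(2)] .
      show "(\<integral>\<^sup>+a. \<integral>\<^sup>+a'. h (x(i := a'), x'(i := a)) \<partial>P \<partial>P) = (\<integral>\<^sup>+a. \<integral>\<^sup>+a'. h (x(i := a), x'(i := a')) \<partial>P \<partial>P)"
        by (rule PP.Fubini') measurable
    qed
    also have "\<dots> = (\<integral>\<^sup>+a. \<integral>\<^sup>+x'. \<integral>\<^sup>+a'. h (x(i := a), x'(i := a')) \<partial>P \<partial>?I \<partial>P)"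
      by (rule PI.Fubini') measurable
    finally show ?thesis .
  qed
  show ?thesis unfolding L R by (intro nn_integral_cong inner)
qed


definition swp :: "nat set \<Rightarrow> (nat \<Rightarrow> 'z) \<times> (nat \<Rightarrow> 'z) \<Rightarrow> (nat \<Rightarrow> 'z) \<times> (nat \<Rightarrow> 'z)" where
  "swp J x = ((\<lambda>i. if i \<in> J then snd x i else fst x i), (\<lambda>i. if i \<in> J then fst x i else snd x i))"

lemma measurable_swp1:
  "(\<lambda>x. (\<lambda>i. if i \<in> J then snd x i else fst x i)) \<in> measurable (PiM I M \<Otimes>\<^sub>M PiM I M) (PiM I M)"
proof (rule measurable_PiM_single')
  fix j assume j: "j \<in> I"
  show "(\<lambda>x. if j \<in> J then snd x j else fst x j) \<in> measurable (PiM I M \<Otimes>\<^sub>M PiM I M) (M j)"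
    using j by (cases "j \<in> J") simp_all
next
  show "(\<lambda>x. (\<lambda>i. if i \<in> J then snd x i else fst x i)) \<in> space (PiM I M \<Otimes>\<^sub>M PiM I M) \<rightarrow> (\<Pi>\<^sub>E j\<in>I. space (M j))"
    by (auto simp: space_pair_measure space_PiM PiE_iff extensional_def)
qed

lemma measurable_swp:
  "swp J \<in> measurable (PiM I M \<Otimes>\<^sub>M PiM I M) (PiM I M \<Otimes>\<^sub>M PiM I M)"
proof -
  have 1: "(\<lambda>x. (\<lambda>i. if i \<in> J then snd x i else fst x i)) \<in> measurable (PiM I M \<Otimes>\<^sub>M PiM I M) (PiM I M)"
    by (rule measurable_swp1)
  have 2: "(\<lambda>x. (\<lambda>i. if i \<in> J then fst x i else snd x i)) \<in> measurable (PiM I M \<Otimes>\<^sub>M PiM I M) (PiM I M)"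
  proof -
    have e: "(\<lambda>x. (\<lambda>i. if i \<in> -J then snd x i else fst x i)) = (\<lambda>x. (\<lambda>i. if i \<in> J then fst x i else snd x i))"
      by (auto simp: fun_eq_iff)
    show ?thesis using measurable_swp1[of "- J" I M] unfolding e .
  qed
  show ?thesis unfolding swp_def using 1 2 by (rule measurable_Pair)
qed

lemma swap_set:
  fixes P :: "'z measure" and h :: "(nat \<Rightarrow> 'z) \<times> (nat \<Rightarrow> 'z) \<Rightarrow> ennreal"
  assumes P: "prob_space P" and I: "finite I" and J: "J \<subseteq> I"
    and h: "h \<in> borel_measurable (PiM I (\<lambda>_. P) \<Otimes>\<^sub>M PiM I (\<lambda>_. P))"
  shows "(\<integral>\<^sup>+D. \<integral>\<^sup>+D'. h (swp J (D, D')) \<partial>PiM I (\<lambda>_. P) \<partial>PiM I (\<lambda>_. P))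
       = (\<integral>\<^sup>+D. \<integral>\<^sup>+D'. h (D, D') \<partial>PiM I (\<lambda>_. P) \<partial>PiM I (\<lambda>_. P))"
proof -
  have "finite J" using J I by (rule finite_subset)
  then show ?thesis using J
  proof (induction J rule: finite_induct)
    case empty
    then show ?case by (simp add: swp_def)
  next
    case (insert j J)
    have jI: "j \<in> I" and JI: "J \<subseteq> I" using insert.prems by auto
    have eq: "swp (insert j J) (D, D') = swp J (D(j := D' j), D'(j := D j))" for D D'
      using insert.hyps by (auto simp: swp_def)
    have hm: "(\<lambda>x. h (swp J x)) \<in> borel_measurable (PiM I (\<lambda>_. P) \<Otimes>\<^sub>M PiM I (\<lambda>_. P))"
      using measurable_comp[OF measurable_swp h] by (simp add: comp_def)
    have "(\<integral>\<^sup>+D. \<integral>\<^sup>+D'. h (swp (insert j J) (D, D')) \<partial>PiM I (\<lambda>_. P) \<partial>PiM I (\<lambda>_. P))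
        = (\<integral>\<^sup>+D. \<integral>\<^sup>+D'. (\<lambda>x. h (swp J x)) (D(j := D' j), D'(j := D j)) \<partial>PiM I (\<lambda>_. P) \<partial>PiM I (\<lambda>_. P))"
      by (simp add: eq)
    also have "\<dots> = (\<integral>\<^sup>+D. \<integral>\<^sup>+D'. (\<lambda>x. h (swp J x)) (D, D') \<partial>PiM I (\<lambda>_. P) \<partial>PiM I (\<lambda>_. P))"
      using swap_one[OF P, of "I - {j}" j, unfolded insert_Diff[OF jI], OF _ _ hm] I by simp
    also have "\<dots> = (\<integral>\<^sup>+D. \<integral>\<^sup>+D'. h (D, D') \<partial>PiM I (\<lambda>_. P) \<partial>PiM I (\<lambda>_. P))"
      using insert.IH JI by simp
    finally show ?case .
  qed
qed


locale setting =
  fixes P :: "('a \<times> real) measure"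
    and n M :: nat
    and f :: "nat \<Rightarrow> 'a \<Rightarrow> real"
    and loss :: "real \<Rightarrow> real \<Rightarrow> real"
    and b C \<nu> \<mu> s :: real
    and pr :: "nat \<Rightarrow> real"
    and \<theta>s :: "nat \<Rightarrow> real"
  assumes P: "prob_space P"
    and b: "b > 0"
    and C: "C > 0"
    and snd_meas: "snd \<in> borel_measurable P"
    and f_meas: "\<And>j. j < M \<Longrightarrow> (\<lambda>z. f j (fst z)) \<in> borel_measurable P"
    and loss_meas: "(\<lambda>(y, t). loss y t) \<in> borel_measurable borel"
    and f_bdd: "AE z in P. \<forall>j<M. \<bar>f j (fst z)\<bar> \<le> b"
    and lipschitz: "AE z in P. \<forall>u\<in>{-b..b}. \<forall>v\<in>{-b..b}.
                      \<bar>loss (snd z) u - loss (snd z) v\<bar> \<le> C * \<bar>u - v\<bar>"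
    and pr_pos: "\<And>j. j < M \<Longrightarrow> pr j > 0"
    and pr_sum: "(\<Sum>j<M. pr j) = 1"
    and \<nu>: "0 < \<nu>" "\<nu> < 1"
    and \<mu>: "\<mu> > 0"
    and \<theta>s: "\<theta>s \<in> Theta M"
    and s_pos: "s > 0"
    and s1: "s \<le> \<mu> * real n / (2 * C * (1 - \<nu>))\<^sup>2"
    and s2: "s < real n / (2 * sqrt 3 * b * C * (1 - \<nu>))"
begin

interpretation P: prob_space P by (rule P)

definition Qgood :: "'a \<times> real \<Rightarrow> bool" where
  "Qgood z \<longleftrightarrow> (\<forall>j<M. \<bar>f j (fst z)\<bar> \<le> b) \<and> (\<forall>u\<in>{-b..b}. \<forall>v\<in>{-b..b}.
                      \<bar>loss (snd z) u - loss (snd z) v\<bar> \<le> C * \<bar>u - v\<bar>)"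

definition Nbad where "Nbad = (SOME N. N \<in> null_sets P \<and> (\<forall>z \<in> space P - N. Qgood z))"

definition Gs where "Gs = space P - Nbad"

lemma Nbad: "Nbad \<in> null_sets P" "\<And>z. z \<in> space P - Nbad \<Longrightarrow> Qgood z"
proof -
  have "AE z in P. Qgood z" using f_bdd lipschitz unfolding Qgood_def by eventually_elim auto
  then have "\<exists>N. N \<in> null_sets P \<and> (\<forall>z \<in> space P - N. Qgood z)" unfolding eventually_ae_filter by blast
  from someI_ex[OF this] show "Nbad \<in> null_sets P" "\<And>z. z \<in> space P - Nbad \<Longrightarrow> Qgood z"
    unfolding Nbad_def by auto
qed

lemma Gs_sets[measurable]: "Gs \<in> sets P"
  using Nbad(1) unfolding Gs_def by auto

lemma AE_Gs: "AE z in P. z \<in> Gs"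
proof -
  have "AE z in P. z \<notin> Nbad" using Nbad(1) by (rule AE_not_in)
  then show ?thesis by (auto simp: Gs_def)
qed

lemma Gs_Q: "z \<in> Gs \<Longrightarrow> Qgood z"
  using Nbad(2) by (auto simp: Gs_def)

lemma Gs_f: "z \<in> Gs \<Longrightarrow> j < M \<Longrightarrow> \<bar>f j (fst z)\<bar> \<le> b"
  using Gs_Q by (auto simp: Qgood_def)

lemma Gs_lip: "z \<in> Gs \<Longrightarrow> \<bar>u\<bar> \<le> b \<Longrightarrow> \<bar>v\<bar> \<le> b \<Longrightarrow> \<bar>loss (snd z) u - loss (snd z) v\<bar> \<le> C * \<bar>u - v\<bar>"
  using Gs_Q by (auto simp: Qgood_def abs_le_iff)

lemma Theta_M_pos: "q \<in> Theta M \<Longrightarrow> M > 0"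
  by (auto simp: Theta_def intro: Nat.gr0I)

lemma Theta_le1: "q \<in> Theta M \<Longrightarrow> j < M \<Longrightarrow> q j \<le> 1"
proof -
  assume q: "q \<in> Theta M" and j: "j < M"
  have "q j \<le> (\<Sum>i<M. q i)"
    using q j by (intro member_le_sum) (auto simp: Theta_def)
  then show ?thesis using q by (simp add: Theta_def)
qed

lemma ftheta_bdd: "q \<in> Theta M \<Longrightarrow> z \<in> Gs \<Longrightarrow> \<bar>f_theta M f q (fst z)\<bar> \<le> b"
proof -
  assume q: "q \<in> Theta M" and z: "z \<in> Gs"
  have "\<bar>f_theta M f q (fst z)\<bar> \<le> (\<Sum>j<M. \<bar>q j * f j (fst z)\<bar>)"
    unfolding f_theta_def by (rule sum_abs)
  also have "\<dots> \<le> (\<Sum>j<M. q j * b)"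
    using q Gs_f[OF z] by (intro sum_mono) (auto simp: Theta_def abs_mult intro: mult_left_mono)
  also have "\<dots> = b" using q by (simp add: Theta_def sum_distrib_right[symmetric])
  finally show ?thesis .
qed

lemma ftheta_diff: "\<bar>f_theta M f q (fst z) - f_theta M f r (fst z)\<bar> \<le> b * (\<Sum>j<M. \<bar>q j - r j\<bar>)"
  if "z \<in> Gs" for q r z
proof -
  have "\<bar>f_theta M f q (fst z) - f_theta M f r (fst z)\<bar> = \<bar>\<Sum>j<M. (q j - r j) * f j (fst z)\<bar>"
    unfolding f_theta_def by (simp add: sum_subtractf left_diff_distrib)
  also have "\<dots> \<le> (\<Sum>j<M. \<bar>(q j - r j) * f j (fst z)\<bar>)" by (rule sum_abs)
  also have "\<dots> \<le> (\<Sum>j<M. \<bar>q j - r j\<bar> * b)"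
    using Gs_f[OF that] by (intro sum_mono) (auto simp: abs_mult intro: mult_left_mono)
  finally show ?thesis by (simp add: sum_distrib_left mult.commute)
qed

lemma n_pos: "n > 0"
proof (rule ccontr)
  assume "\<not> n > 0" then have "n = 0" by simp
  then show False using s1 s_pos by simp
qed

definition lam where "lam = s * (1 - \<nu>)"
definition kap where "kap = 2 * lam * C / real n"

lemma lam_pos: "lam > 0" using s_pos \<nu> by (simp add: lam_def)
lemma kap_pos: "kap > 0" using lam_pos C n_pos by (simp add: kap_def)

lemma kap_b: "(kap * b)\<^sup>2 * 3 \<le> 1"
proof -
  have d: "2 * sqrt 3 * b * C * (1 - \<nu>) > 0" using b C \<nu> by simp
  have "s * (2 * sqrt 3 * b * C * (1 - \<nu>)) < real n"
    using s2 d by (simp add: less_divide_eq)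
  then have "kap * b * sqrt 3 < 1"
    using n_pos by (simp add: kap_def lam_def field_simps)
  moreover have "kap * b * sqrt 3 \<ge> 0" using kap_pos b by simp
  ultimately have "(kap * b * sqrt 3)\<^sup>2 \<le> 1\<^sup>2"
    by (intro power_mono) auto
  then show ?thesis by (simp add: power_mult_distrib)
qed

lemma kap_mu: "real n * kap\<^sup>2 \<le> s * \<mu>"
proof -
  have d: "(2 * C * (1 - \<nu>))\<^sup>2 > 0" using C \<nu> by simp
  have "s * (2 * C * (1 - \<nu>))\<^sup>2 \<le> \<mu> * real n" using s1 d by (simp add: le_divide_eq)
  have e1: "kap = s * (2 * C * (1 - \<nu>)) / real n" by (simp add: kap_def lam_def)
  have "real n * kap\<^sup>2 = s * (s * (2 * C * (1 - \<nu>))\<^sup>2) / real n"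
    unfolding e1 using n_pos by (simp add: power2_eq_square)
  also have "\<dots> \<le> s * (\<mu> * real n) / real n"
    using s_pos n_pos \<open>s * (2 * C * (1 - \<nu>))\<^sup>2 \<le> \<mu> * real n\<close> by (intro divide_right_mono mult_left_mono) auto
  also have "\<dots> = s * \<mu>" using n_pos by simp
  finally show ?thesis .
qed

end


context setting begin

interpretation P: prob_space P by (rule P)

lemma ftheta_meas[measurable]: "(\<lambda>z. f_theta M f q (fst z)) \<in> borel_measurable P"
  unfolding f_theta_def
  by (intro borel_measurable_sum borel_measurable_times borel_measurable_const) (auto intro: f_meas)

lemma loss_comp:
  assumes "a \<in> borel_measurable P" "c \<in> borel_measurable P"
  shows "(\<lambda>z. loss (a z) (c z)) \<in> borel_measurable P"
proof -
  have l: "(\<lambda>(y, t). loss y t) \<in> borel_measurable (borel \<Otimes>\<^sub>M borel)"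
    using loss_meas by (simp add: borel_prod)
  from measurable_comp[OF measurable_Pair[OF assms] l] show ?thesis by (simp add: comp_def)
qed

definition gg :: "(nat \<Rightarrow> real) \<Rightarrow> 'a \<times> real \<Rightarrow> real" where
  "gg q z = (if z \<in> Gs then loss (snd z) (f_theta M f q (fst z)) - loss (snd z) (f_theta M f \<theta>s (fst z)) else 0)"

definition hh :: "nat \<Rightarrow> 'a \<times> real \<Rightarrow> real" where
  "hh j z = (if z \<in> Gs then f j (fst z) - f_theta M f \<theta>s (fst z) else 0)"

definition uu :: "'a \<times> real \<Rightarrow> (nat \<Rightarrow> real) \<Rightarrow> real" where
  "uu z q = (\<Sum>j<M. q j * hh j z)"

definition vv :: "nat \<Rightarrow> real" where
  "vv j = (\<integral>z. (f j (fst z) - f_theta M f \<theta>s (fst z))\<^sup>2 \<partial>P)"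

definition cc :: "(nat \<Rightarrow> real) \<Rightarrow> real" where
  "cc q = s * \<mu> * (\<Sum>j<M. q j * vv j) + Kfun M pr q"

definition Thq :: "(nat \<Rightarrow> real) set" where
  "Thq = {q \<in> Theta M. (\<forall>j<M. q j \<in> \<rat>) \<and> (\<forall>j. M \<le> j \<longrightarrow> q j = 0)}"

lemma gg_meas[measurable]: "gg q \<in> borel_measurable P"
proof -
  have "(\<lambda>z. loss (snd z) (f_theta M f q (fst z)) - loss (snd z) (f_theta M f \<theta>s (fst z))) \<in> borel_measurable P"
    by (intro borel_measurable_diff loss_comp) (auto intro: snd_meas)
  then show ?thesis unfolding gg_def by measurable
qed

lemma hh_meas[measurable]: "j < M \<Longrightarrow> hh j \<in> borel_measurable P"
  unfolding hh_def using f_meas by measurable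

lemma Gs_space: "z \<in> Gs \<Longrightarrow> z \<in> space P" by (auto simp: Gs_def)

lemma hh_bdd: "j < M \<Longrightarrow> \<bar>hh j z\<bar> \<le> 2 * b"
proof (cases "z \<in> Gs")
  case True
  assume j: "j < M"
  have "\<bar>f j (fst z)\<bar> \<le> b" using Gs_f[OF True j] .
  moreover have "\<bar>f_theta M f \<theta>s (fst z)\<bar> \<le> b" using ftheta_bdd[OF \<theta>s True] .
  ultimately show ?thesis using True by (simp add: hh_def)
qed (use b in \<open>simp add: hh_def\<close>)

lemma uu_eq: "q \<in> Theta M \<Longrightarrow> z \<in> Gs \<Longrightarrow> uu z q = f_theta M f q (fst z) - f_theta M f \<theta>s (fst z)"
proof -
  assume q: "q \<in> Theta M" and z: "z \<in> Gs"
  have "uu z q = (\<Sum>j<M. q j * f j (fst z)) - (\<Sum>j<M. q j) * f_theta M f \<theta>s (fst z)"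
    using z by (simp add: uu_def hh_def right_diff_distrib sum_subtractf sum_distrib_right)
  then show ?thesis using q by (simp add: Theta_def f_theta_def)
qed

lemma gg_lip: "q \<in> Theta M \<Longrightarrow> r \<in> Theta M \<Longrightarrow> \<bar>gg q z - gg r z\<bar> \<le> C * \<bar>uu z q - uu z r\<bar>"
proof (cases "z \<in> Gs")
  case True
  assume q: "q \<in> Theta M" and r: "r \<in> Theta M"
  have "\<bar>gg q z - gg r z\<bar> = \<bar>loss (snd z) (f_theta M f q (fst z)) - loss (snd z) (f_theta M f r (fst z))\<bar>"
    using True by (simp add: gg_def)
  also have "\<dots> \<le> C * \<bar>f_theta M f q (fst z) - f_theta M f r (fst z)\<bar>"
    by (rule Gs_lip[OF True ftheta_bdd[OF q True] ftheta_bdd[OF r True]])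
  also have "\<dots> = C * \<bar>uu z q - uu z r\<bar>" using uu_eq[OF q True] uu_eq[OF r True] by simp
  finally show ?thesis .
qed (use C in \<open>simp add: gg_def uu_def hh_def\<close>)

lemma gg_abs: "q \<in> Theta M \<Longrightarrow> \<bar>gg q z\<bar> \<le> C * \<bar>uu z q\<bar>"
proof (cases "z \<in> Gs")
  case True
  assume q: "q \<in> Theta M"
  have "\<bar>gg q z\<bar> = \<bar>loss (snd z) (f_theta M f q (fst z)) - loss (snd z) (f_theta M f \<theta>s (fst z))\<bar>"
    using True by (simp add: gg_def)
  also have "\<dots> \<le> C * \<bar>f_theta M f q (fst z) - f_theta M f \<theta>s (fst z)\<bar>"
    by (rule Gs_lip[OF True ftheta_bdd[OF q True] ftheta_bdd[OF \<theta>s True]])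
  also have "\<dots> = C * \<bar>uu z q\<bar>" using uu_eq[OF q True] by simp
  finally show ?thesis .
qed (use C in \<open>simp add: gg_def uu_def hh_def\<close>)

lemma gg_diff: "\<bar>gg q z - gg r z\<bar> \<le> C * b * (\<Sum>j<M. \<bar>q j - r j\<bar>)"
  if "q \<in> Theta M" "r \<in> Theta M"
proof (cases "z \<in> Gs")
  case True
  have "\<bar>gg q z - gg r z\<bar> = \<bar>loss (snd z) (f_theta M f q (fst z)) - loss (snd z) (f_theta M f r (fst z))\<bar>"
    using True by (simp add: gg_def)
  also have "\<dots> \<le> C * \<bar>f_theta M f q (fst z) - f_theta M f r (fst z)\<bar>"
    by (rule Gs_lip[OF True ftheta_bdd[OF that(1) True] ftheta_bdd[OF that(2) True]])
  also have "\<dots> \<le> C * (b * (\<Sum>j<M. \<bar>q j - r j\<bar>))"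
    using C ftheta_diff[OF True] by (intro mult_left_mono) auto
  finally show ?thesis by simp
next
  case False
  have "0 \<le> C * b * (\<Sum>j<M. \<bar>q j - r j\<bar>)" using C b by (intro mult_nonneg_nonneg sum_nonneg) auto
  then show ?thesis using False by (simp add: gg_def)
qed

lemma gg_bdd: "q \<in> Theta M \<Longrightarrow> \<bar>gg q z\<bar> \<le> 2 * C * b"
proof -
  assume q: "q \<in> Theta M"
  have "\<bar>gg q z\<bar> = \<bar>gg q z - gg \<theta>s z\<bar>" by (simp add: gg_def)
  also have "\<dots> \<le> C * b * (\<Sum>j<M. \<bar>q j - \<theta>s j\<bar>)" by (rule gg_diff[OF q \<theta>s])
  also have "(\<Sum>j<M. \<bar>q j - \<theta>s j\<bar>) \<le> (\<Sum>j<M. q j + \<theta>s j)"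
  proof (intro sum_mono)
    fix j assume "j \<in> {..<M}"
    then have "0 \<le> q j" "0 \<le> \<theta>s j" using q \<theta>s by (auto simp: Theta_def)
    then show "\<bar>q j - \<theta>s j\<bar> \<le> q j + \<theta>s j" by linarith
  qed
  also have "\<dots> = 2" using q \<theta>s by (simp add: Theta_def sum.distrib)
  finally show ?thesis using C b by (simp add: mult_left_mono)
qed

end


lemma sup_approx:
  fixes \<Phi> :: "'b \<Rightarrow> real"
  assumes "\<And>e. e > 0 \<Longrightarrow> \<exists>r\<in>T. \<Phi> q \<le> \<Phi> r + e"
  shows "ennreal (exp (\<Phi> q)) \<le> (SUP r\<in>T. ennreal (exp (\<Phi> r)))"
proof (rule ennreal_le_epsilon)
  fix e :: real assume e: "0 < e"
  define a where "a = exp (\<Phi> q)"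
  have a: "a > 0" by (simp add: a_def)
  obtain r where r: "r \<in> T" "\<Phi> q \<le> \<Phi> r + e / a" using assms[of "e / a"] e a by auto
  have "exp (\<Phi> q) \<le> exp (\<Phi> r) * exp (e / a)" using r(2) by (simp add: exp_add[symmetric])
  then have "a * exp (- (e / a)) \<le> exp (\<Phi> r)"
    by (simp add: a_def exp_minus field_simps)
  moreover have "a * (1 - e / a) \<le> a * exp (- (e / a))"
    using a exp_ge_add_one_self[of "- (e / a)"] by (intro mult_left_mono) auto
  moreover have "a * (1 - e / a) = a - e" using a by (simp add: field_simps)
  ultimately have "a \<le> exp (\<Phi> r) + e" by linarith
  then have "ennreal a \<le> ennreal (exp (\<Phi> r)) + ennreal e"
    using e by (simp add: ennreal_plus[symmetric] del: ennreal_plus)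
  also have "\<dots> \<le> (SUP r\<in>T. ennreal (exp (\<Phi> r))) + ennreal e"
    using r(1) by (intro add_mono SUP_upper) auto
  finally show "ennreal (exp (\<Phi> q)) \<le> (SUP r\<in>T. ennreal (exp (\<Phi> r))) + ennreal e"
    by (simp add: a_def)
qed

context setting begin

lemma countable_Thq: "countable Thq"
proof -
  define emb :: "rat list \<Rightarrow> nat \<Rightarrow> real" where
    "emb xs j = (if j < length xs then of_rat (xs ! j) else 0)" for xs j
  have "Thq \<subseteq> range emb"
  proof
    fix q assume q: "q \<in> Thq"
    define g where "g j = (SOME r. q j = of_rat r)" for j
    have g: "q j = of_rat (g j)" if "j < M" for j
    proof -
      have "q j \<in> \<rat>" using q that by (auto simp: Thq_def)
      then have "\<exists>r. q j = of_rat r" by (auto elim: Rats_cases)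
      then show ?thesis unfolding g_def by (rule someI_ex)
    qed
    have "emb (map g [0..<M]) = q"
    proof
      fix j show "emb (map g [0..<M]) j = q j"
        using g q by (auto simp: emb_def Thq_def)
    qed
    then show "q \<in> range emb" by (metis rangeI)
  qed
  moreover have "countable (range emb)" by simp
  ultimately show ?thesis by (rule countable_subset)
qed

lemma Thq_Theta: "Thq \<subseteq> Theta M" by (auto simp: Thq_def)

lemma Thq_dense:
  assumes q: "q \<in> Theta M" and d: "d > 0"
  shows "\<exists>r\<in>Thq. (\<Sum>j<M. \<bar>q j - r j\<bar>) \<le> d"
proof -
  have M: "M > 0" using Theta_M_pos[OF q] .
  define e where "e = d / (2 * real M)"
  have e: "e > 0" using d M by (simp add: e_def)
  have "\<forall>j. \<exists>x. j < M \<longrightarrow> x \<in> \<rat> \<and> q j < x \<and> x < q j + e"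
    using Rats_dense_in_real[of "q j" "q j + e" for j] e by auto
  then obtain \<rho> where \<rho>: "\<And>j. j < M \<Longrightarrow> \<rho> j \<in> \<rat> \<and> q j < \<rho> j \<and> \<rho> j < q j + e"
    by metis
  define S where "S = (\<Sum>j<M. \<rho> j)"
  have qsum: "(\<Sum>j<M. q j) = 1" and qnn: "\<And>j. j < M \<Longrightarrow> q j \<ge> 0" using q by (auto simp: Theta_def)
  have S1: "S > 1"
  proof -
    have "(\<Sum>j<M. q j) < (\<Sum>j<M. \<rho> j)" using \<rho> M by (intro sum_strict_mono) auto
    then show ?thesis using qsum by (simp add: S_def)
  qed
  have S2: "S - 1 \<le> real M * e"
  proof -
    have "(\<Sum>j<M. \<rho> j) \<le> (\<Sum>j<M. q j + e)" using \<rho> by (intro sum_mono) (auto intro: less_imp_le)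
    then show ?thesis using qsum by (simp add: S_def sum.distrib)
  qed
  have SQ: "S \<in> \<rat>" unfolding S_def using \<rho> by (intro Rats_sum) auto
  define r where "r j = (if j < M then \<rho> j / S else 0)" for j
  have \<rho>pos: "\<rho> j \<ge> 0" if "j < M" for j using \<rho>[OF that] qnn[OF that] by linarith
  have rT: "r \<in> Thq"
  proof -
    have "(\<Sum>j<M. r j) = (\<Sum>j<M. \<rho> j) / S" by (simp add: r_def sum_divide_distrib)
    then have "(\<Sum>j<M. r j) = 1" using S1 by (simp add: S_def)
    moreover have "\<forall>j<M. 0 \<le> r j" using \<rho>pos S1 by (simp add: r_def)
    moreover have "\<forall>j<M. r j \<in> \<rat>" using \<rho> SQ by (simp add: r_def Rats_divide)
    moreover have "\<forall>j. M \<le> j \<longrightarrow> r j = 0" by (simp add: r_def)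
    ultimately show ?thesis by (simp add: Thq_def Theta_def)
  qed
  have "(\<Sum>j<M. \<bar>q j - r j\<bar>) \<le> (\<Sum>j<M. (\<rho> j - q j) + \<rho> j * (1 - 1 / S))"
  proof (intro sum_mono)
    fix j assume j: "j \<in> {..<M}"
    have "r j = \<rho> j / S" using j by (simp add: r_def)
    moreover have "\<rho> j / S \<le> \<rho> j" using \<rho>pos[of j] j S1 by (simp add: divide_le_eq mult_le_cancel_left1)
    moreover have "\<rho> j - \<rho> j / S = \<rho> j * (1 - 1 / S)" by (simp add: algebra_simps)
    ultimately show "\<bar>q j - r j\<bar> \<le> (\<rho> j - q j) + \<rho> j * (1 - 1 / S)"
      using \<rho>[of j] j \<rho>pos[of j] S1 by (auto simp: abs_le_iff)
  qed
  also have "\<dots> = (S - 1) + S * (1 - 1 / S)"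
    using qsum by (simp add: sum.distrib sum_subtractf S_def sum_distrib_right[symmetric])
  also have "\<dots> = 2 * (S - 1)" using S1 by (simp add: field_simps)
  also have "\<dots> \<le> 2 * (real M * e)" using S2 by simp
  also have "\<dots> = d" using M by (simp add: e_def)
  finally show ?thesis using rT by blast
qed

lemma sup_dense:
  fixes \<Phi> :: "(nat \<Rightarrow> real) \<Rightarrow> real"
  assumes q: "q \<in> Theta M" and L: "L \<ge> 0"
    and lip: "\<And>r. r \<in> Theta M \<Longrightarrow> \<Phi> q \<le> \<Phi> r + L * (\<Sum>j<M. \<bar>q j - r j\<bar>)"
  shows "ennreal (exp (\<Phi> q)) \<le> (SUP r\<in>Thq. ennreal (exp (\<Phi> r)))"
proof (rule sup_approx)
  fix e :: real assume e: "e > 0"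
  obtain r where r: "r \<in> Thq" "(\<Sum>j<M. \<bar>q j - r j\<bar>) \<le> e / (L + 1)"
    using Thq_dense[OF q, of "e / (L + 1)"] e L by auto
  have "\<Phi> q \<le> \<Phi> r + L * (\<Sum>j<M. \<bar>q j - r j\<bar>)" using lip r(1) Thq_Theta by auto
  also have "L * (\<Sum>j<M. \<bar>q j - r j\<bar>) \<le> L * (e / (L + 1))" using r(2) L by (intro mult_left_mono)
  also have "L * (e / (L + 1)) \<le> e" using L e by (simp add: field_simps)
  finally show "\<exists>r\<in>Thq. \<Phi> q \<le> \<Phi> r + e" using r(1) by auto
qed

end


context setting begin

definition XX :: "nat set \<Rightarrow> (nat \<Rightarrow> 'a \<times> real) \<Rightarrow> ennreal" where
  "XX S D = (SUP q\<in>Thq. ennreal (exp (- cc q + (\<Sum>i<n. sg S i * (2 * lam / real n * gg q (D i))))))"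
definition YY :: "nat set \<Rightarrow> (nat \<Rightarrow> 'a \<times> real) \<Rightarrow> ennreal" where
  "YY S D = (SUP q\<in>Thq. ennreal (exp (- cc q + (\<Sum>i<n. sg S i * (- (2 * lam / real n) * gg q (D i))))))"
definition ZZ :: "nat set \<Rightarrow> (nat \<Rightarrow> 'a \<times> real) \<Rightarrow> ennreal" where
  "ZZ S D = (SUP q\<in>Thq. ennreal (exp (- cc q + (\<Sum>i<n. sg S i * (kap * uu (D i) q)))))"
definition HH :: "nat set \<Rightarrow> (nat \<Rightarrow> 'a \<times> real) \<times> (nat \<Rightarrow> 'a \<times> real) \<Rightarrow> ennreal" where
  "HH S x = (SUP q\<in>Thq. ennreal (exp (lam / real n * (\<Sum>i<n. sg S i * (gg q (snd x i) - gg q (fst x i))) - cc q)))"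
definition H0 :: "(nat \<Rightarrow> 'a \<times> real) \<times> (nat \<Rightarrow> 'a \<times> real) \<Rightarrow> ennreal" where
  "H0 x = (SUP q\<in>Thq. ennreal (exp (lam / real n * (\<Sum>i<n. gg q (snd x i) - gg q (fst x i)) - cc q)))"

lemma exp_amgm: "2 * exp ((x + y) / 2) \<le> exp x + exp (y::real)"
proof -
  define u v where "u = exp (x / 2)" and "v = exp (y / 2)"
  have "exp ((x + y) / 2) = u * v" by (simp add: u_def v_def exp_add[symmetric] add_divide_distrib)
  moreover have "exp x = u\<^sup>2" "exp y = v\<^sup>2"
    by (simp_all add: u_def v_def power2_eq_square exp_add[symmetric])
  moreover have "0 \<le> (u - v)\<^sup>2" by simp
  ultimately show ?thesis by (simp add: power2_eq_square algebra_simps)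
qed

lemma HH_split: "2 * HH S x \<le> XX S (snd x) + YY S (fst x)"
proof -
  have "2 * HH S x = (SUP q\<in>Thq. 2 * ennreal (exp (lam / real n * (\<Sum>i<n. sg S i * (gg q (snd x i) - gg q (fst x i))) - cc q)))"
    unfolding HH_def by (simp add: SUP_mult_left_ennreal)
  also have "\<dots> \<le> XX S (snd x) + YY S (fst x)"
  proof (rule SUP_least)
    fix q assume q: "q \<in> Thq"
    define \<alpha> where "\<alpha> = - cc q + (\<Sum>i<n. sg S i * (2 * lam / real n * gg q (snd x i)))"
    define \<beta> where "\<beta> = - cc q + (\<Sum>i<n. sg S i * (- (2 * lam / real n) * gg q (fst x i)))"
    have e: "lam / real n * (\<Sum>i<n. sg S i * (gg q (snd x i) - gg q (fst x i))) - cc q = (\<alpha> + \<beta>) / 2"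
    proof -
      have "(\<Sum>i<n. sg S i * (2 * lam / real n * gg q (snd x i))) + (\<Sum>i<n. sg S i * (- (2 * lam / real n) * gg q (fst x i)))
          = (\<Sum>i<n. 2 * (lam / real n * (sg S i * (gg q (snd x i) - gg q (fst x i)))))"
        by (simp only: sum.distrib[symmetric]) (rule sum.cong, simp_all add: algebra_simps)
      also have "\<dots> = 2 * (lam / real n * (\<Sum>i<n. sg S i * (gg q (snd x i) - gg q (fst x i))))"
        by (simp add: sum_distrib_left)
      finally show ?thesis unfolding \<alpha>_def \<beta>_def by simp
    qed
    have "2 * ennreal (exp ((\<alpha> + \<beta>) / 2)) = ennreal (2 * exp ((\<alpha> + \<beta>) / 2))"
      by (simp add: ennreal_mult)
    also have "\<dots> \<le> ennreal (exp \<alpha> + exp \<beta>)" by (intro ennreal_leI exp_amgm)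
    also have "\<dots> = ennreal (exp \<alpha>) + ennreal (exp \<beta>)" by (simp add: ennreal_plus)
    also have "\<dots> \<le> XX S (snd x) + YY S (fst x)"
      unfolding XX_def YY_def \<alpha>_def \<beta>_def using q by (intro add_mono SUP_upper) auto
    finally show "2 * ennreal (exp (lam / real n * (\<Sum>i<n. sg S i * (gg q (snd x i) - gg q (fst x i))) - cc q))
        \<le> XX S (snd x) + YY S (fst x)" unfolding e .
  qed
  finally show ?thesis .
qed

lemma XX_ZZ: "(\<Sum>S\<in>Pow {..<n}. XX S D) \<le> (\<Sum>S\<in>Pow {..<n}. ZZ S D)"
  unfolding XX_def ZZ_def
proof (rule contraction)
  fix i q assume q: "q \<in> Thq"
  then have qT: "q \<in> Theta M" using Thq_Theta by auto
  have "\<bar>2 * lam / real n * gg q (D i)\<bar> = 2 * lam / real n * \<bar>gg q (D i)\<bar>"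
    using lam_pos by (simp add: abs_mult)
  also have "\<dots> \<le> 2 * lam / real n * (C * \<bar>uu (D i) q\<bar>)"
    using lam_pos n_pos gg_abs[OF qT] by (intro mult_left_mono) auto
  also have "\<dots> = \<bar>kap * uu (D i) q\<bar>" using kap_pos lam_pos C by (simp add: kap_def abs_mult)
  finally show "\<bar>2 * lam / real n * gg q (D i)\<bar> \<le> \<bar>kap * uu (D i) q\<bar>" .
next
  fix i q r assume q: "q \<in> Thq" and r: "r \<in> Thq"
  then have qT: "q \<in> Theta M" and rT: "r \<in> Theta M" using Thq_Theta by auto
  have "\<bar>2 * lam / real n * gg q (D i) - 2 * lam / real n * gg r (D i)\<bar> = 2 * lam / real n * \<bar>gg q (D i) - gg r (D i)\<bar>"
    by (simp only: right_diff_distrib[symmetric] abs_mult) (use lam_pos n_pos in simp)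
  also have "\<dots> \<le> 2 * lam / real n * (C * \<bar>uu (D i) q - uu (D i) r\<bar>)"
    using lam_pos n_pos gg_lip[OF qT rT] by (intro mult_left_mono) auto
  also have "\<dots> = \<bar>kap * uu (D i) q - kap * uu (D i) r\<bar>"
    by (simp only: right_diff_distrib[symmetric] abs_mult) (use lam_pos C n_pos in \<open>simp add: kap_def\<close>)
  finally show "\<bar>2 * lam / real n * gg q (D i) - 2 * lam / real n * gg r (D i)\<bar> \<le> \<bar>kap * uu (D i) q - kap * uu (D i) r\<bar>" .
qed simp

lemma YY_ZZ: "(\<Sum>S\<in>Pow {..<n}. YY S D) \<le> (\<Sum>S\<in>Pow {..<n}. ZZ S D)"
  unfolding YY_def ZZ_def
proof (rule contraction)
  fix i q assume q: "q \<in> Thq"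
  then have qT: "q \<in> Theta M" using Thq_Theta by auto
  have "\<bar>- (2 * lam / real n) * gg q (D i)\<bar> = 2 * lam / real n * \<bar>gg q (D i)\<bar>"
    using lam_pos by (simp add: abs_mult)
  also have "\<dots> \<le> 2 * lam / real n * (C * \<bar>uu (D i) q\<bar>)"
    using lam_pos n_pos gg_abs[OF qT] by (intro mult_left_mono) auto
  also have "\<dots> = \<bar>kap * uu (D i) q\<bar>" using kap_pos lam_pos C by (simp add: kap_def abs_mult)
  finally show "\<bar>- (2 * lam / real n) * gg q (D i)\<bar> \<le> \<bar>kap * uu (D i) q\<bar>" .
next
  fix i q r assume q: "q \<in> Thq" and r: "r \<in> Thq"
  then have qT: "q \<in> Theta M" and rT: "r \<in> Theta M" using Thq_Theta by auto
  have "\<bar>- (2 * lam / real n) * gg q (D i) - - (2 * lam / real n) * gg r (D i)\<bar> = 2 * lam / real n * \<bar>gg q (D i) - gg r (D i)\<bar>"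
    by (simp only: right_diff_distrib[symmetric] abs_mult) (use lam_pos n_pos in simp)
  also have "\<dots> \<le> 2 * lam / real n * (C * \<bar>uu (D i) q - uu (D i) r\<bar>)"
    using lam_pos n_pos gg_lip[OF qT rT] by (intro mult_left_mono) auto
  also have "\<dots> = \<bar>kap * uu (D i) q - kap * uu (D i) r\<bar>"
    by (simp only: right_diff_distrib[symmetric] abs_mult) (use lam_pos C n_pos in \<open>simp add: kap_def\<close>)
  finally show "\<bar>- (2 * lam / real n) * gg q (D i) - - (2 * lam / real n) * gg r (D i)\<bar> \<le> \<bar>kap * uu (D i) q - kap * uu (D i) r\<bar>" .
qed simp

end


context setting begin

interpretation P: prob_space P by (rule P)

definition Om where "Om = PiM {..<n} (\<lambda>_. P)"

lemma Om_prob: "prob_space Om" unfolding Om_def by (intro prob_space_PiM P)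

lemma comp_meas: "g \<in> borel_measurable P \<Longrightarrow> i < n \<Longrightarrow> (\<lambda>D. g (D i)) \<in> borel_measurable Om"
  unfolding Om_def by (rule measurable_compose[OF measurable_component_singleton]) auto

lemma hh_sq: "j < M \<Longrightarrow> (\<integral>z. (hh j z)\<^sup>2 \<partial>P) = vv j"
  unfolding vv_def
  by (rule integral_cong_AE) (use AE_Gs f_meas in \<open>auto simp: hh_def elim!: eventually_mono\<close>)

lemma vv_nonneg: "vv j \<ge> 0" unfolding vv_def by simp

lemma intF:
  assumes j: "j < M"
  shows "(\<integral>\<^sup>+z. ennreal (exp (kap * hh j z) + exp (- (kap * hh j z))) \<partial>P) \<le> ennreal (2 * exp (kap\<^sup>2 * vv j))"
proof -
  have bd: "(kap * hh j z)\<^sup>2 \<le> 2" for z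
  proof -
    have "\<bar>kap * hh j z\<bar> \<le> kap * (2 * b)" using hh_bdd[OF j, of z] kap_pos by (simp add: abs_mult)
    then have "\<bar>kap * hh j z\<bar>\<^sup>2 \<le> (kap * (2 * b))\<^sup>2"
      by (intro power_mono) auto
    then have "(kap * hh j z)\<^sup>2 \<le> (kap * (2 * b))\<^sup>2" by simp
    also have "\<dots> = 4 * (kap * b)\<^sup>2" by (simp add: power2_eq_square)
    also have "\<dots> \<le> 2" using kap_b by simp
    finally show ?thesis .
  qed
  have int: "integrable P (\<lambda>z. 2 * (1 + kap\<^sup>2 * (hh j z)\<^sup>2))"
  proof (rule P.integrable_const_bound[where B = "2 * (1 + kap\<^sup>2 * (2*b)\<^sup>2)"])
    show "AE x in P. norm (2 * (1 + kap\<^sup>2 * (hh j x)\<^sup>2)) \<le> 2 * (1 + kap\<^sup>2 * (2 * b)\<^sup>2)"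
    proof (intro AE_I2)
      fix x
      have "\<bar>hh j x\<bar>\<^sup>2 \<le> (2*b)\<^sup>2" using hh_bdd[OF j, of x] by (intro power_mono) auto
      then have "(hh j x)\<^sup>2 \<le> (2*b)\<^sup>2" by simp
      then have "kap\<^sup>2 * (hh j x)\<^sup>2 \<le> kap\<^sup>2 * (2*b)\<^sup>2" by (intro mult_left_mono) auto
      then show "norm (2 * (1 + kap\<^sup>2 * (hh j x)\<^sup>2)) \<le> 2 * (1 + kap\<^sup>2 * (2 * b)\<^sup>2)"
        by (simp add: mult.commute mult.left_commute)
    qed
  qed (use j in measurable)
  have "(\<integral>\<^sup>+z. ennreal (exp (kap * hh j z) + exp (- (kap * hh j z))) \<partial>P)
      \<le> (\<integral>\<^sup>+z. ennreal (2 * (1 + kap\<^sup>2 * (hh j z)\<^sup>2)) \<partial>P)"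
    using cosh_bound[OF bd] by (intro nn_integral_mono ennreal_leI) (simp add: power_mult_distrib)
  also have "\<dots> = ennreal (\<integral>z. 2 * (1 + kap\<^sup>2 * (hh j z)\<^sup>2) \<partial>P)"
    by (rule nn_integral_eq_integral[OF int]) auto
  also have "(\<integral>z. 2 * (1 + kap\<^sup>2 * (hh j z)\<^sup>2) \<partial>P) = 2 * (1 + kap\<^sup>2 * vv j)"
  proof -
    have "integrable P (\<lambda>z. (hh j z)\<^sup>2)"
    proof (rule P.integrable_const_bound[where B = "(2*b)\<^sup>2"])
      show "AE x in P. norm ((hh j x)\<^sup>2) \<le> (2 * b)\<^sup>2"
      proof (intro AE_I2)
        fix x
        have "\<bar>hh j x\<bar>\<^sup>2 \<le> (2*b)\<^sup>2" using hh_bdd[OF j, of x] by (intro power_mono) auto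
        then show "norm ((hh j x)\<^sup>2) \<le> (2 * b)\<^sup>2" by simp
      qed
    qed (use j in measurable)
    then show ?thesis using hh_sq[OF j] P.prob_space by simp
  qed
  also have "ennreal (2 * (1 + kap\<^sup>2 * vv j)) \<le> ennreal (2 * exp (kap\<^sup>2 * vv j))"
    by (intro ennreal_leI mult_left_mono) (auto intro: exp_ge_add_one_self)
  finally show ?thesis .
qed

lemma ZZ_pt: "ZZ S D \<le> ennreal (\<Sum>j<M. pr j * exp (- (s * \<mu> * vv j)) * exp (\<Sum>i<n. sg S i * (kap * hh j (D i))))"
  unfolding ZZ_def
proof (rule SUP_least)
  fix q assume q: "q \<in> Thq"
  then have qT: "q \<in> Theta M" using Thq_Theta by auto
  have Mp: "M > 0" using Theta_M_pos[OF qT] .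
  have qnn: "\<And>j. j < M \<Longrightarrow> 0 \<le> q j" and qs: "(\<Sum>j<M. q j) = 1" using qT by (auto simp: Theta_def)
  define y where "y j = kap * (\<Sum>i<n. sg S i * hh j (D i)) - s * \<mu> * vv j - ln (1 / pr j)" for j
  have sw: "(\<Sum>i<n. sg S i * (kap * uu (D i) q)) = (\<Sum>j<M. q j * (kap * (\<Sum>i<n. sg S i * hh j (D i))))"
  proof -
    have "(\<Sum>i<n. sg S i * (kap * uu (D i) q)) = (\<Sum>i<n. \<Sum>j<M. q j * (kap * (sg S i * hh j (D i))))"
      unfolding uu_def by (simp add: sum_distrib_left algebra_simps)
    also have "\<dots> = (\<Sum>j<M. \<Sum>i<n. q j * (kap * (sg S i * hh j (D i))))" by (rule sum.swap)
    also have "\<dots> = (\<Sum>j<M. q j * (kap * (\<Sum>i<n. sg S i * hh j (D i))))"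
      by (simp add: sum_distrib_left)
    finally show ?thesis .
  qed
  have E: "- cc q + (\<Sum>i<n. sg S i * (kap * uu (D i) q)) = (\<Sum>j<M. q j * y j)"
    unfolding sw cc_def Kfun_def y_def
    by (simp add: sum_distrib_left sum_subtractf right_diff_distrib sum.distrib algebra_simps)
  have "exp (\<Sum>j<M. q j * y j) \<le> (\<Sum>j<M. q j * exp (y j))"
    using Mp qs qnn by (intro exp_convex_sum) auto
  also have "\<dots> \<le> (\<Sum>j<M. exp (y j))"
    using qnn Theta_le1[OF qT] by (intro sum_mono mult_left_le_one_le) auto
  also have "\<dots> = (\<Sum>j<M. pr j * exp (- (s * \<mu> * vv j)) * exp (\<Sum>i<n. sg S i * (kap * hh j (D i))))"
  proof (intro sum.cong refl)
    fix j assume j: "j \<in> {..<M}"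
    then have p: "pr j > 0" using pr_pos by auto
    have "exp (y j) = exp (kap * (\<Sum>i<n. sg S i * hh j (D i))) * exp (- (s * \<mu> * vv j)) * exp (ln (pr j))"
      unfolding y_def using p by (simp add: exp_diff exp_minus ln_div exp_add divide_inverse mult_ac)
    also have "\<dots> = pr j * exp (- (s * \<mu> * vv j)) * exp (\<Sum>i<n. sg S i * (kap * hh j (D i)))"
      using p by (simp add: sum_distrib_left mult_ac)
    finally show "exp (y j) = pr j * exp (- (s * \<mu> * vv j)) * exp (\<Sum>i<n. sg S i * (kap * hh j (D i)))" .
  qed
  finally show "ennreal (exp (- cc q + (\<Sum>i<n. sg S i * (kap * uu (D i) q))))
      \<le> ennreal (\<Sum>j<M. pr j * exp (- (s * \<mu> * vv j)) * exp (\<Sum>i<n. sg S i * (kap * hh j (D i))))"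
    unfolding E by (rule ennreal_leI)
qed

lemma sumZZ_pt: "(\<Sum>S\<in>Pow {..<n}. ZZ S D) \<le>
   ennreal (\<Sum>j<M. pr j * exp (- (s * \<mu> * vv j)) * (\<Prod>i<n. exp (kap * hh j (D i)) + exp (- (kap * hh j (D i)))))"
proof -
  have "(\<Sum>S\<in>Pow {..<n}. ZZ S D) \<le> (\<Sum>S\<in>Pow {..<n}. ennreal (\<Sum>j<M. pr j * exp (- (s * \<mu> * vv j)) * exp (\<Sum>i<n. sg S i * (kap * hh j (D i)))))"
    by (intro sum_mono ZZ_pt)
  also have "\<dots> = ennreal (\<Sum>S\<in>Pow {..<n}. \<Sum>j<M. pr j * exp (- (s * \<mu> * vv j)) * exp (\<Sum>i<n. sg S i * (kap * hh j (D i))))"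
    by (intro sum_ennreal sum_nonneg mult_nonneg_nonneg) (auto simp: less_imp_le pr_pos)
  also have "(\<Sum>S\<in>Pow {..<n}. \<Sum>j<M. pr j * exp (- (s * \<mu> * vv j)) * exp (\<Sum>i<n. sg S i * (kap * hh j (D i))))
     = (\<Sum>j<M. pr j * exp (- (s * \<mu> * vv j)) * (\<Sum>S\<in>Pow {..<n}. exp (\<Sum>i<n. sg S i * (kap * hh j (D i)))))"
    by (subst sum.swap) (simp add: sum_distrib_left)
  also have "\<dots> = (\<Sum>j<M. pr j * exp (- (s * \<mu> * vv j)) * (\<Prod>i<n. exp (kap * hh j (D i)) + exp (- (kap * hh j (D i)))))"
    by (simp add: sum_Pow_exp_sg)
  finally show ?thesis .
qed

lemma intZZ: "(\<integral>\<^sup>+D. (\<Sum>S\<in>Pow {..<n}. ZZ S D) \<partial>Om) \<le> 2 ^ n"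
proof -
  interpret PS: product_sigma_finite "\<lambda>_::nat. P"
    unfolding product_sigma_finite_def using P.sigma_finite_measure_axioms by simp
  have e2: "ennreal ((2::real) ^ n) = 2 ^ n" by (metis ennreal_numeral ennreal_power zero_le_numeral)
  define c where "c j = pr j * exp (- (s * \<mu> * vv j))" for j
  define F where "F j z = exp (kap * hh j z) + exp (- (kap * hh j z))" for j z
  have c0: "j < M \<Longrightarrow> 0 \<le> c j" for j using pr_pos[of j] by (simp add: c_def)
  have F0: "0 \<le> F j z" for j z by (simp add: F_def add_nonneg_nonneg)
  have Fm: "j < M \<Longrightarrow> (\<lambda>z. ennreal (F j z)) \<in> borel_measurable P" for j
    unfolding F_def by measurable
  have "(\<integral>\<^sup>+D. (\<Sum>S\<in>Pow {..<n}. ZZ S D) \<partial>Om) \<le> (\<integral>\<^sup>+D. (\<Sum>j<M. ennreal (c j) * (\<Prod>i<n. ennreal (F j (D i)))) \<partial>Om)"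
  proof (intro nn_integral_mono)
    fix D
    have "(\<Sum>S\<in>Pow {..<n}. ZZ S D) \<le> ennreal (\<Sum>j<M. c j * (\<Prod>i<n. F j (D i)))"
      using sumZZ_pt[of D] by (simp add: c_def F_def)
    also have "\<dots> = (\<Sum>j<M. ennreal (c j * (\<Prod>i<n. F j (D i))))"
      using c0 by (intro sum_ennreal[symmetric]) (auto intro!: mult_nonneg_nonneg prod_nonneg simp: F_def add_nonneg_nonneg)
    also have "\<dots> = (\<Sum>j<M. ennreal (c j) * (\<Prod>i<n. ennreal (F j (D i))))"
      using c0 by (intro sum.cong refl) (auto simp: ennreal_mult prod_ennreal prod_nonneg F0)
    finally show "(\<Sum>S\<in>Pow {..<n}. ZZ S D) \<le> (\<Sum>j<M. ennreal (c j) * (\<Prod>i<n. ennreal (F j (D i))))" .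
  qed
  also have "\<dots> = (\<Sum>j<M. ennreal (c j) * (\<integral>\<^sup>+D. (\<Prod>i<n. ennreal (F j (D i))) \<partial>Om))"
  proof -
    have m: "j < M \<Longrightarrow> (\<lambda>D. \<Prod>i<n. ennreal (F j (D i))) \<in> borel_measurable Om" for j
      unfolding Om_def using Fm by (intro borel_measurable_prod_ennreal) (auto intro!: measurable_compose[OF measurable_component_singleton])
    show ?thesis
      by (subst nn_integral_sum) (use m in \<open>auto intro!: sum.cong nn_integral_cmult\<close>)
  qed
  also have "\<dots> = (\<Sum>j<M. ennreal (c j) * (\<integral>\<^sup>+z. ennreal (F j z) \<partial>P) ^ n)"
  proof (intro sum.cong refl arg_cong2[where f = "(*)"])
    fix j assume "j \<in> {..<M}"
    then have j: "j < M" by simp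
    have "(\<integral>\<^sup>+D. (\<Prod>i<n. ennreal (F j (D i))) \<partial>Om) = (\<Prod>i<n. \<integral>\<^sup>+z. ennreal (F j z) \<partial>P)"
      unfolding Om_def by (rule PS.product_nn_integral_prod) (use Fm[OF j] in auto)
    then show "(\<integral>\<^sup>+D. (\<Prod>i<n. ennreal (F j (D i))) \<partial>Om) = (\<integral>\<^sup>+z. ennreal (F j z) \<partial>P) ^ n"
      by simp
  qed
  also have "\<dots> \<le> (\<Sum>j<M. ennreal (c j) * ennreal (2 * exp (kap\<^sup>2 * vv j)) ^ n)"
    using intF by (intro sum_mono mult_left_mono power_mono) (auto simp: F_def)
  also have "\<dots> = ennreal (\<Sum>j<M. c j * (2 * exp (kap\<^sup>2 * vv j)) ^ n)"
    using c0 by (subst sum_ennreal[symmetric]) (auto simp: ennreal_mult ennreal_power e2 intro!: sum.cong)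
  also have "\<dots> \<le> ennreal (\<Sum>j<M. pr j * 2 ^ n)"
  proof (intro ennreal_leI sum_mono)
    fix j assume "j \<in> {..<M}"
    then have p: "pr j > 0" using pr_pos by auto
    have "c j * (2 * exp (kap\<^sup>2 * vv j)) ^ n = pr j * 2 ^ n * exp (real n * kap\<^sup>2 * vv j - s * \<mu> * vv j)"
      by (simp add: c_def power_mult_distrib exp_of_nat_mult[symmetric] exp_diff exp_minus field_simps)
    also have "\<dots> \<le> pr j * 2 ^ n * 1"
    proof (intro mult_left_mono)
      have "real n * kap\<^sup>2 * vv j \<le> s * \<mu> * vv j"
        using kap_mu vv_nonneg[of j] by (intro mult_right_mono) auto
      then show "exp (real n * kap\<^sup>2 * vv j - s * \<mu> * vv j) \<le> 1" by simp
    qed (use p in auto)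
    finally show "c j * (2 * exp (kap\<^sup>2 * vv j)) ^ n \<le> pr j * 2 ^ n" by simp
  qed
  also have "\<dots> = 2 ^ n" using pr_sum e2 by (simp add: sum_distrib_right[symmetric])
  finally show ?thesis .
qed

end


context setting begin

interpretation P: prob_space P by (rule P)
interpretation O: prob_space Om by (rule Om_prob)

lemma comp_meas_all: "g \<in> borel_measurable P \<Longrightarrow> (\<lambda>D. g (D i)) \<in> borel_measurable Om"
proof (cases "i < n")
  case True
  assume "g \<in> borel_measurable P" then show ?thesis using True by (rule comp_meas)
next
  case False
  have "(\<lambda>D. g undefined) \<in> borel_measurable Om" by simp
  moreover have "\<And>D. D \<in> space Om \<Longrightarrow> g undefined = g (D i)"
    using False by (auto simp: Om_def space_PiM PiE_def extensional_def)
  ultimately show ?thesis by (rule measurable_cong[THEN iffD1, rotated])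
qed

lemma gg_comp_meas[measurable]: "(\<lambda>D. gg q (D i)) \<in> borel_measurable Om"
  by (rule comp_meas_all) simp

lemma hh_comp_meas[measurable]: "j < M \<Longrightarrow> (\<lambda>D. hh j (D i)) \<in> borel_measurable Om"
  by (rule comp_meas_all) simp

lemma uu_comp_meas[measurable]: "(\<lambda>D. uu (D i) q) \<in> borel_measurable Om"
  unfolding uu_def by (intro borel_measurable_sum borel_measurable_times borel_measurable_const hh_comp_meas) auto

lemma XX_meas[measurable]: "XX S \<in> borel_measurable Om"
  unfolding XX_def using countable_Thq by measurable

lemma YY_meas[measurable]: "YY S \<in> borel_measurable Om"
  unfolding YY_def using countable_Thq by measurable

lemma ZZ_meas[measurable]: "ZZ S \<in> borel_measurable Om"
  unfolding ZZ_def using countable_Thq by measurable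

lemma H0_meas[measurable]: "H0 \<in> borel_measurable (Om \<Otimes>\<^sub>M Om)"
  unfolding H0_def using countable_Thq by measurable

lemma HH_swap: "S \<subseteq> {..<n} \<Longrightarrow> HH S x = H0 (swp ({..<n} - S) x)"
  unfolding HH_def H0_def
proof (intro SUP_cong refl arg_cong[where f = ennreal] arg_cong[where f = exp] arg_cong2[where f = "(-)"] arg_cong2[where f = "(*)"] sum.cong)
  fix q i assume "S \<subseteq> {..<n}" "i \<in> {..<n}"
  then show "sg S i * (gg q (snd x i) - gg q (fst x i)) =
         gg q (snd (swp ({..<n} - S) x) i) - gg q (fst (swp ({..<n} - S) x) i)"
    by (cases "i \<in> S") (auto simp: sg_def swp_def)
qed

lemma HH_int: "S \<subseteq> {..<n} \<Longrightarrow> (\<integral>\<^sup>+D. \<integral>\<^sup>+D'. HH S (D, D') \<partial>Om \<partial>Om) = (\<integral>\<^sup>+D. \<integral>\<^sup>+D'. H0 (D, D') \<partial>Om \<partial>Om)"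
  unfolding HH_swap Om_def
  by (rule swap_set[OF P]) (use H0_meas in \<open>auto simp: Om_def\<close>)

end


lemma jensen_exp:
  assumes Mx: "prob_space Mx" and X: "X \<in> borel_measurable Mx" and B: "\<And>x. x \<in> space Mx \<Longrightarrow> \<bar>X x\<bar> \<le> B"
  shows "ennreal (exp (\<integral>x. X x \<partial>Mx)) \<le> (\<integral>\<^sup>+x. ennreal (exp (X x)) \<partial>Mx)"
proof -
  interpret prob_space Mx by fact
  have iX: "integrable Mx X"
    by (rule integrable_const_bound[where B = B]) (use B X in auto)
  have iE: "integrable Mx (\<lambda>x. exp (X x))"
  proof (rule integrable_const_bound[where B = "exp B"])
    show "AE x in Mx. norm (exp (X x)) \<le> exp B" using B by (intro AE_I2) (auto simp: abs_le_iff)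
  qed (use X in measurable)
  define m where "m = (\<integral>x. X x \<partial>Mx)"
  have "(\<integral>x. exp m * (1 + (X x - m)) \<partial>Mx) \<le> (\<integral>x. exp (X x) \<partial>Mx)"
  proof (rule integral_mono)
    show "integrable Mx (\<lambda>x. exp m * (1 + (X x - m)))" using iX by auto
    show "integrable Mx (\<lambda>x. exp (X x))" by (rule iE)
    fix x
    have "exp m * (1 + (X x - m)) \<le> exp m * exp (X x - m)"
      by (intro mult_left_mono exp_ge_add_one_self) auto
    then show "exp m * (1 + (X x - m)) \<le> exp (X x)" by (simp add: exp_diff)
  qed
  moreover have "(\<integral>x. exp m * (1 + (X x - m)) \<partial>Mx) = exp m"
    using iX prob_space by (simp add: m_def)
  ultimately have "exp m \<le> (\<integral>x. exp (X x) \<partial>Mx)" by simp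
  moreover have "(\<integral>\<^sup>+x. ennreal (exp (X x)) \<partial>Mx) = ennreal (\<integral>x. exp (X x) \<partial>Mx)"
    by (rule nn_integral_eq_integral[OF iE]) auto
  ultimately show ?thesis by (simp add: m_def ennreal_leI)
qed

context setting begin

interpretation P: prob_space P by (rule P)
interpretation O: prob_space Om by (rule Om_prob)

lemma int_comp:
  fixes g :: "'a \<times> real \<Rightarrow> real"
  shows "i < n \<Longrightarrow> g \<in> borel_measurable P \<Longrightarrow> (\<integral>D. g (D i) \<partial>Om) = (\<integral>z. g z \<partial>P)"
proof -
  assume i: "i < n" and g: "g \<in> borel_measurable P"
  have "distr Om P (\<lambda>D. D i) = P" unfolding Om_def using i P by (intro distr_PiM_component) auto
  then have "(\<integral>z. g z \<partial>P) = (\<integral>z. g z \<partial>distr Om P (\<lambda>D. D i))" by simp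
  also have "\<dots> = (\<integral>D. g (D i) \<partial>Om)"
  proof -
    have m: "(\<lambda>D. D i) \<in> measurable Om P" unfolding Om_def using i by (intro measurable_component_singleton) auto
    show ?thesis using integral_distr[OF m g] by simp
  qed
  finally show ?thesis by simp
qed

lemma gg_int: "q \<in> Theta M \<Longrightarrow> integrable Om (\<lambda>D. gg q (D i))"
  by (rule O.integrable_const_bound[where B = "2 * C * b"]) (auto intro: gg_bdd)

lemma Phi_int:
  assumes q: "q \<in> Theta M"
  shows "(\<integral>D'. lam / real n * (\<Sum>i<n. gg q (D' i) - gg q (D i)) - cc q \<partial>Om)
     = lam * ((\<integral>z. gg q z \<partial>P) - (1 / real n) * (\<Sum>i<n. gg q (D i))) - cc q"
proof -
  have e: "(\<lambda>D'. lam / real n * (\<Sum>i<n. gg q (D' i) - gg q (D i)) - cc q)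
     = (\<lambda>D'. lam / real n * (\<Sum>i<n. gg q (D' i)) - (lam / real n * (\<Sum>i<n. gg q (D i)) + cc q))"
    by (simp add: sum_subtractf algebra_simps)
  have "(\<integral>D'. (\<Sum>i<n. gg q (D' i)) \<partial>Om) = (\<Sum>i<n. \<integral>D'. gg q (D' i) \<partial>Om)"
    by (simp add: gg_int[OF q])
  also have "\<dots> = real n * (\<integral>z. gg q z \<partial>P)" by (simp add: int_comp)
  finally have s: "(\<integral>D'. (\<Sum>i<n. gg q (D' i)) \<partial>Om) = real n * (\<integral>z. gg q z \<partial>P)" .
  have iS: "integrable Om (\<lambda>D'. \<Sum>i<n. gg q (D' i))" using gg_int[OF q] by auto
  show ?thesis unfolding e using iS s n_pos O.prob_space
    by (simp add: field_simps)
qed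

definition WW where "WW = (\<Sum>j<M. \<bar>s * \<mu> * vv j + ln (1 / pr j)\<bar>)"

lemma cc_lip: "q \<in> Theta M \<Longrightarrow> r \<in> Theta M \<Longrightarrow> \<bar>cc q - cc r\<bar> \<le> WW * (\<Sum>j<M. \<bar>q j - r j\<bar>)"
proof -
  assume q: "q \<in> Theta M" and r: "r \<in> Theta M"
  define w where "w j = s * \<mu> * vv j + ln (1 / pr j)" for j
  have "cc q - cc r = (\<Sum>j<M. (q j - r j) * w j)"
    unfolding cc_def Kfun_def w_def
    by (simp add: sum_distrib_left sum_subtractf[symmetric] sum.distrib[symmetric] algebra_simps)
  then have "\<bar>cc q - cc r\<bar> \<le> (\<Sum>j<M. \<bar>(q j - r j) * w j\<bar>)" by (simp add: sum_abs)
  also have "\<dots> \<le> (\<Sum>j<M. \<bar>q j - r j\<bar> * WW)"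
  proof (intro sum_mono)
    fix j assume j: "j \<in> {..<M}"
    have "\<bar>w j\<bar> \<le> WW" unfolding WW_def w_def using j
      by (intro member_le_sum[of j "{..<M}" "\<lambda>j. \<bar>s * \<mu> * vv j + ln (1 / pr j)\<bar>"]) auto
    then show "\<bar>(q j - r j) * w j\<bar> \<le> \<bar>q j - r j\<bar> * WW" by (simp add: abs_mult mult_left_mono)
  qed
  finally show ?thesis by (simp add: sum_distrib_right[symmetric] mult.commute)
qed

lemma WW_nonneg: "WW \<ge> 0" unfolding WW_def by (intro sum_nonneg) auto

lemma Phi_lip:
  assumes q: "q \<in> Theta M" and r: "r \<in> Theta M"
  shows "lam / real n * (\<Sum>i<n. gg q (D' i) - gg q (D i)) - cc q
      \<le> (lam / real n * (\<Sum>i<n. gg r (D' i) - gg r (D i)) - cc r) + (2 * lam * C * b + WW) * (\<Sum>j<M. \<bar>q j - r j\<bar>)"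
proof -
  define \<Delta> where "\<Delta> = (\<Sum>j<M. \<bar>q j - r j\<bar>)"
  have "(\<Sum>i<n. gg q (D' i) - gg q (D i)) - (\<Sum>i<n. gg r (D' i) - gg r (D i))
      = (\<Sum>i<n. (gg q (D' i) - gg r (D' i)) - (gg q (D i) - gg r (D i)))"
    by (simp add: sum_subtractf[symmetric] algebra_simps)
  also have "\<dots> \<le> (\<Sum>i<n. 2 * (C * b * \<Delta>))"
  proof (intro sum_mono)
    fix i
    have "\<bar>gg q (D' i) - gg r (D' i)\<bar> \<le> C * b * \<Delta>" "\<bar>gg q (D i) - gg r (D i)\<bar> \<le> C * b * \<Delta>"
      using gg_diff[OF q r] by (auto simp: \<Delta>_def)
    then show "(gg q (D' i) - gg r (D' i)) - (gg q (D i) - gg r (D i)) \<le> 2 * (C * b * \<Delta>)" by linarith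
  qed
  also have "\<dots> = real n * (2 * C * b * \<Delta>)" by simp
  finally have A: "(\<Sum>i<n. gg q (D' i) - gg q (D i)) - (\<Sum>i<n. gg r (D' i) - gg r (D i)) \<le> real n * (2 * C * b * \<Delta>)" .
  have "lam / real n * ((\<Sum>i<n. gg q (D' i) - gg q (D i)) - (\<Sum>i<n. gg r (D' i) - gg r (D i)))
     \<le> lam / real n * (real n * (2 * C * b * \<Delta>))"
    using A lam_pos n_pos by (intro mult_left_mono) auto
  also have "\<dots> = 2 * lam * C * b * \<Delta>" using n_pos by simp
  finally have B: "lam / real n * (\<Sum>i<n. gg q (D' i) - gg q (D i)) - lam / real n * (\<Sum>i<n. gg r (D' i) - gg r (D i)) \<le> 2 * lam * C * b * \<Delta>"
    by (simp add: right_diff_distrib)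
  have "\<bar>cc q - cc r\<bar> \<le> WW * \<Delta>" using cc_lip[OF q r] by (simp add: \<Delta>_def)
  with B show ?thesis unfolding \<Delta>_def[symmetric] by (simp add: algebra_simps abs_le_iff)
qed

lemma jensen_pt:
  assumes q: "q \<in> Theta M"
  shows "ennreal (exp (lam * ((\<integral>z. gg q z \<partial>P) - (1 / real n) * (\<Sum>i<n. gg q (D i))) - cc q))
     \<le> (\<integral>\<^sup>+D'. H0 (D, D') \<partial>Om)"
proof -
  define X where "X D' = lam / real n * (\<Sum>i<n. gg q (D' i) - gg q (D i)) - cc q" for D'
  have Xm: "X \<in> borel_measurable Om" unfolding X_def by measurable
  have XB: "\<bar>X D'\<bar> \<le> lam / real n * (real n * (4 * C * b)) + \<bar>cc q\<bar>" for D'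
  proof -
    have "\<bar>\<Sum>i<n. gg q (D' i) - gg q (D i)\<bar> \<le> (\<Sum>i<n. \<bar>gg q (D' i) - gg q (D i)\<bar>)" by (rule sum_abs)
    also have "\<dots> \<le> (\<Sum>i<n. 4 * C * b)"
    proof (intro sum_mono)
      fix i show "\<bar>gg q (D' i) - gg q (D i)\<bar> \<le> 4 * C * b" using gg_bdd[OF q, of "D' i"] gg_bdd[OF q, of "D i"] by linarith
    qed
    finally have "\<bar>\<Sum>i<n. gg q (D' i) - gg q (D i)\<bar> \<le> real n * (4 * C * b)" by simp
    moreover have "\<bar>lam / real n * (\<Sum>i<n. gg q (D' i) - gg q (D i))\<bar> = lam / real n * \<bar>\<Sum>i<n. gg q (D' i) - gg q (D i)\<bar>"
      using lam_pos n_pos by (simp add: abs_mult)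
    ultimately have "\<bar>lam / real n * (\<Sum>i<n. gg q (D' i) - gg q (D i))\<bar> \<le> lam / real n * (real n * (4 * C * b))"
      using lam_pos n_pos by (metis divide_nonneg_nonneg less_imp_le mult_left_mono of_nat_0_le_iff)
    then show ?thesis unfolding X_def by linarith
  qed
  have "ennreal (exp (lam * ((\<integral>z. gg q z \<partial>P) - (1 / real n) * (\<Sum>i<n. gg q (D i))) - cc q))
     = ennreal (exp (\<integral>D'. X D' \<partial>Om))" unfolding X_def Phi_int[OF q] ..
  also have "\<dots> \<le> (\<integral>\<^sup>+D'. ennreal (exp (X D')) \<partial>Om)"
    by (rule jensen_exp[OF Om_prob Xm XB])
  also have "\<dots> \<le> (\<integral>\<^sup>+D'. H0 (D, D') \<partial>Om)"
  proof (intro nn_integral_mono)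
    fix D'
    have "ennreal (exp (X D')) \<le> (SUP r\<in>Thq. ennreal (exp (lam / real n * (\<Sum>i<n. gg r (D' i) - gg r (D i)) - cc r)))"
      unfolding X_def
      by (rule sup_dense[OF q, of "2 * lam * C * b + WW"]) (use lam_pos C b WW_nonneg Phi_lip[OF q] in auto)
    then show "ennreal (exp (X D')) \<le> H0 (D, D')" by (simp add: H0_def)
  qed
  finally show ?thesis .
qed

end


context setting begin

interpretation P: prob_space P by (rule P)
interpretation O: prob_space Om by (rule Om_prob)

lemma HH_meas[measurable]: "HH S \<in> borel_measurable (Om \<Otimes>\<^sub>M Om)"
  unfolding HH_def using countable_Thq by measurable

lemma AE_good: "AE D in Om. \<forall>i\<in>{..<n}. D i \<in> Gs"
proof (intro eventually_ball_finite ballI)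
  fix i assume i: "i \<in> {..<n}"
  show "AE D in Om. D i \<in> Gs" unfolding Om_def
    by (rule AE_PiM_component[OF _ i AE_Gs]) (rule P)
qed simp

lemma double_int_le:
  assumes S: "S \<subseteq> {..<n}"
  shows "2 * (\<integral>\<^sup>+D. \<integral>\<^sup>+D'. H0 (D, D') \<partial>Om \<partial>Om) \<le> (\<integral>\<^sup>+D. XX S D \<partial>Om) + (\<integral>\<^sup>+D. YY S D \<partial>Om)"
proof -
  interpret OS: sigma_finite_measure Om by (rule O.sigma_finite_measure_axioms)
  have "2 * (\<integral>\<^sup>+D. \<integral>\<^sup>+D'. H0 (D, D') \<partial>Om \<partial>Om) = 2 * (\<integral>\<^sup>+D. \<integral>\<^sup>+D'. HH S (D, D') \<partial>Om \<partial>Om)"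
    using HH_int[OF S] by simp
  also have "\<dots> = (\<integral>\<^sup>+D. 2 * (\<integral>\<^sup>+D'. HH S (D, D') \<partial>Om) \<partial>Om)"
    by (rule nn_integral_cmult[symmetric]) measurable
  also have "\<dots> = (\<integral>\<^sup>+D. (\<integral>\<^sup>+D'. 2 * HH S (D, D') \<partial>Om) \<partial>Om)"
  proof (intro nn_integral_cong)
    fix D assume D: "D \<in> space Om"
    show "2 * (\<integral>\<^sup>+D'. HH S (D, D') \<partial>Om) = (\<integral>\<^sup>+D'. 2 * HH S (D, D') \<partial>Om)"
      by (rule nn_integral_cmult[symmetric]) (use D in measurable)
  qed
  also have "\<dots> \<le> (\<integral>\<^sup>+D. (\<integral>\<^sup>+D'. XX S D' + YY S D \<partial>Om) \<partial>Om)"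
    using HH_split[of S] by (intro nn_integral_mono) auto
  also have "\<dots> = (\<integral>\<^sup>+D. (\<integral>\<^sup>+D'. XX S D' \<partial>Om) + YY S D \<partial>Om)"
    by (intro nn_integral_cong) (simp add: nn_integral_add O.emeasure_space_1)
  also have "\<dots> = (\<integral>\<^sup>+D. XX S D \<partial>Om) + (\<integral>\<^sup>+D. YY S D \<partial>Om)"
    by (simp add: nn_integral_add O.emeasure_space_1)
  finally show ?thesis .
qed

lemma H0_int_le1: "(\<integral>\<^sup>+D. \<integral>\<^sup>+D'. H0 (D, D') \<partial>Om \<partial>Om) \<le> 1"
proof -
  define A where "A = (\<integral>\<^sup>+D. \<integral>\<^sup>+D'. H0 (D, D') \<partial>Om \<partial>Om)"
  have "(2 ^ n * 2) * A = (\<Sum>S\<in>Pow {..<n}. 2 * A)"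
    by (simp add: card_Pow mult_ac)
  also have "\<dots> \<le> (\<Sum>S\<in>Pow {..<n}. (\<integral>\<^sup>+D. XX S D \<partial>Om) + (\<integral>\<^sup>+D. YY S D \<partial>Om))"
    unfolding A_def by (intro sum_mono double_int_le) auto
  also have "\<dots> = (\<integral>\<^sup>+D. (\<Sum>S\<in>Pow {..<n}. XX S D) \<partial>Om) + (\<integral>\<^sup>+D. (\<Sum>S\<in>Pow {..<n}. YY S D) \<partial>Om)"
    by (simp add: sum.distrib nn_integral_sum)
  also have "\<dots> \<le> (\<integral>\<^sup>+D. (\<Sum>S\<in>Pow {..<n}. ZZ S D) \<partial>Om) + (\<integral>\<^sup>+D. (\<Sum>S\<in>Pow {..<n}. ZZ S D) \<partial>Om)"
    by (intro add_mono nn_integral_mono XX_ZZ YY_ZZ)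
  also have "\<dots> \<le> 2 ^ n + 2 ^ n" by (intro add_mono intZZ)
  also have "\<dots> = (2 ^ n * 2) * 1" by (simp add: mult_2_right)
  finally have "(2 ^ n * 2) * A \<le> (2 ^ n * 2) * (1::ennreal)" .
  moreover have "(2 ^ n * 2 :: ennreal) \<noteq> 0" by simp
  moreover have "(2 ^ n * 2 :: ennreal) \<noteq> top" by (simp add: ennreal_mult_eq_top_iff power_eq_top_ennreal)
  ultimately show ?thesis unfolding A_def using ennreal_mult_le_mult_iff by blast
qed

end


context setting begin

interpretation P: prob_space P by (rule P)
interpretation O: prob_space Om by (rule Om_prob)

lemma main:
  fixes \<theta>h :: "(nat \<Rightarrow> 'a \<times> real) \<Rightarrow> nat \<Rightarrow> real"
  assumes \<theta>h_Theta: "\<And>D. D \<in> space (PiM {..<n} (\<lambda>_. P)) \<Longrightarrow> \<theta>h D \<in> Theta M"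
  shows "(\<integral>\<^sup>+ D. ennreal (exp (
            s * ((1 - \<nu>) *
                   ((\<integral>z. loss (snd z) (f_theta M f (\<theta>h D) (fst z))
                          - loss (snd z) (f_theta M f \<theta>s (fst z)) \<partial>P)
                    - (1 / real n) * (\<Sum>i<n. loss (snd (D i)) (f_theta M f (\<theta>h D) (fst (D i)))
                                          - loss (snd (D i)) (f_theta M f \<theta>s (fst (D i)))))
                 - \<mu> * (\<Sum>j<M. \<theta>h D j *
                          (\<integral>z. (f j (fst z) - f_theta M f \<theta>s (fst z))\<^sup>2 \<partial>P)))
            - Kfun M pr (\<theta>h D)))
          \<partial>(PiM {..<n} (\<lambda>_. P))) \<le> 1"
proof -
  have "(\<integral>\<^sup>+ D. ennreal (exp (
            s * ((1 - \<nu>) *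
                   ((\<integral>z. loss (snd z) (f_theta M f (\<theta>h D) (fst z))
                          - loss (snd z) (f_theta M f \<theta>s (fst z)) \<partial>P)
                    - (1 / real n) * (\<Sum>i<n. loss (snd (D i)) (f_theta M f (\<theta>h D) (fst (D i)))
                                          - loss (snd (D i)) (f_theta M f \<theta>s (fst (D i)))))
                 - \<mu> * (\<Sum>j<M. \<theta>h D j *
                          (\<integral>z. (f j (fst z) - f_theta M f \<theta>s (fst z))\<^sup>2 \<partial>P)))
            - Kfun M pr (\<theta>h D))) \<partial>Om)
     \<le> (\<integral>\<^sup>+D. \<integral>\<^sup>+D'. H0 (D, D') \<partial>Om \<partial>Om)"
  proof (rule nn_integral_mono_AE)
    show "AE D in Om. ennreal (exp (
            s * ((1 - \<nu>) *
                   ((\<integral>z. loss (snd z) (f_theta M f (\<theta>h D) (fst z))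
                          - loss (snd z) (f_theta M f \<theta>s (fst z)) \<partial>P)
                    - (1 / real n) * (\<Sum>i<n. loss (snd (D i)) (f_theta M f (\<theta>h D) (fst (D i)))
                                          - loss (snd (D i)) (f_theta M f \<theta>s (fst (D i)))))
                 - \<mu> * (\<Sum>j<M. \<theta>h D j *
                          (\<integral>z. (f j (fst z) - f_theta M f \<theta>s (fst z))\<^sup>2 \<partial>P)))
            - Kfun M pr (\<theta>h D))) \<le> (\<integral>\<^sup>+D'. H0 (D, D') \<partial>Om)"
      using AE_good AE_space
    proof eventually_elim
      case (elim D)
      define q where "q = \<theta>h D"
      have q: "q \<in> Theta M" using \<theta>h_Theta elim(2) by (simp add: q_def Om_def)
      have eI: "(\<integral>z. loss (snd z) (f_theta M f q (fst z)) - loss (snd z) (f_theta M f \<theta>s (fst z)) \<partial>P)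
          = (\<integral>z. gg q z \<partial>P)"
      proof (rule integral_cong_AE)
        show "(\<lambda>z. loss (snd z) (f_theta M f q (fst z)) - loss (snd z) (f_theta M f \<theta>s (fst z))) \<in> borel_measurable P"
          by (intro borel_measurable_diff loss_comp) (auto intro: snd_meas)
        show "AE z in P. loss (snd z) (f_theta M f q (fst z)) - loss (snd z) (f_theta M f \<theta>s (fst z)) = gg q z"
          using AE_Gs by eventually_elim (simp add: gg_def)
      qed simp
      have eS: "(\<Sum>i<n. loss (snd (D i)) (f_theta M f q (fst (D i))) - loss (snd (D i)) (f_theta M f \<theta>s (fst (D i))))
          = (\<Sum>i<n. gg q (D i))"
        using elim(1) by (intro sum.cong) (auto simp: gg_def)
      have "s * ((1 - \<nu>) *
                   ((\<integral>z. loss (snd z) (f_theta M f q (fst z))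
                          - loss (snd z) (f_theta M f \<theta>s (fst z)) \<partial>P)
                    - (1 / real n) * (\<Sum>i<n. loss (snd (D i)) (f_theta M f q (fst (D i)))
                                          - loss (snd (D i)) (f_theta M f \<theta>s (fst (D i)))))
                 - \<mu> * (\<Sum>j<M. q j *
                          (\<integral>z. (f j (fst z) - f_theta M f \<theta>s (fst z))\<^sup>2 \<partial>P)))
            - Kfun M pr q
          = lam * ((\<integral>z. gg q z \<partial>P) - (1 / real n) * (\<Sum>i<n. gg q (D i))) - cc q"
        unfolding eI eS by (simp add: lam_def cc_def vv_def algebra_simps)
      then show ?case using jensen_pt[OF q, of D] by (simp add: q_def)
    qed
  qed
  also have "\<dots> \<le> 1" by (rule H0_int_le1)
  finally show ?thesis by (simp add: Om_def)
qed

end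


theorem mainTheorem6:
  fixes P :: "('a \<times> real) measure"
    and n M :: nat
    and f :: "nat \<Rightarrow> 'a \<Rightarrow> real"
    and loss :: "real \<Rightarrow> real \<Rightarrow> real"
    and b C \<nu> \<mu> s :: real
    and pr :: "nat \<Rightarrow> real"
    and \<theta>s :: "nat \<Rightarrow> real"
    and \<theta>h :: "(nat \<Rightarrow> 'a \<times> real) \<Rightarrow> nat \<Rightarrow> real"
  assumes P: "prob_space P"
    and b: "b > 0"
    and C: "C > 0"
    and snd_meas: "snd \<in> borel_measurable P"
    and f_meas: "\<And>j. j < M \<Longrightarrow> (\<lambda>z. f j (fst z)) \<in> borel_measurable P"
    and loss_meas: "(\<lambda>(y, t). loss y t) \<in> borel_measurable borel"
    and Y_bdd: "AE z in P. \<bar>snd z\<bar> \<le> b"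
    and f_bdd: "AE z in P. \<forall>j<M. \<bar>f j (fst z)\<bar> \<le> b"
    and lipschitz: "AE z in P. \<forall>u\<in>{-b..b}. \<forall>v\<in>{-b..b}.
                      \<bar>loss (snd z) u - loss (snd z) v\<bar> \<le> C * \<bar>u - v\<bar>"
    and pr_pos: "\<And>j. j < M \<Longrightarrow> pr j > 0"
    and pr_sum: "(\<Sum>j<M. pr j) = 1"
    and \<nu>: "0 < \<nu>" "\<nu> < 1"
    and \<mu>: "\<mu> > 0"
    and \<theta>s: "\<theta>s \<in> Theta M"
    and s_pos: "s > 0"
    and s1: "s \<le> \<mu> * real n / (2 * C * (1 - \<nu>))\<^sup>2"
    and s2: "s < real n / (2 * sqrt 3 * b * C * (1 - \<nu>))"
    and \<theta>h_meas: "\<And>j. j < M \<Longrightarrow> (\<lambda>D. \<theta>h D j) \<in> borel_measurable (PiM {..<n} (\<lambda>_. P))"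
    and \<theta>h_Theta: "\<And>D. D \<in> space (PiM {..<n} (\<lambda>_. P)) \<Longrightarrow> \<theta>h D \<in> Theta M"
  shows "(\<integral>\<^sup>+ D. ennreal (exp (
            s * ((1 - \<nu>) *
                   ((\<integral>z. loss (snd z) (f_theta M f (\<theta>h D) (fst z))
                          - loss (snd z) (f_theta M f \<theta>s (fst z)) \<partial>P)
                    - (1 / real n) * (\<Sum>i<n. loss (snd (D i)) (f_theta M f (\<theta>h D) (fst (D i)))
                                          - loss (snd (D i)) (f_theta M f \<theta>s (fst (D i)))))
                 - \<mu> * (\<Sum>j<M. \<theta>h D j *
                          (\<integral>z. (f j (fst z) - f_theta M f \<theta>s (fst z))\<^sup>2 \<partial>P)))
            - Kfun M pr (\<theta>h D)))
          \<partial>(PiM {..<n} (\<lambda>_. P))) \<le> 1"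
  proof -
  interpret setting P n M f loss b C \<nu> \<mu> s pr \<theta>s
    by (rule setting.intro) (fact P b C snd_meas f_meas loss_meas f_bdd lipschitz pr_pos pr_sum \<nu> \<mu> \<theta>s s_pos s1 s2)+
  show ?thesis by (rule main) (rule \<theta>h_Theta)
qed

end
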